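(* Let $c>0$, $m\in\mathbb{R}$, $r\ge0$, and equip $T^1\mathbb{S}^2(c)$ with the Riemannian metric induced by $h_{m,r}$. Let $(x,e)\in T^1\mathbb{S}^2(c)$ and let $f\in T_x\mathbb{S}^2(c)$ be a unit vector with $\langle e,f\rangle=0$, so that $T_{(x,e)}T^1\mathbb{S}^2(c)$ is spanned by $e^h,f^h,f^v$. Then the sectional curvatures $\hat K$ of $(T^1\mathbb{S}^2(c),h_{m,r})$ at $(x,e)$ satisfy $$\hat K(e^h\wedge f^h)=c-\frac{3c^2}{2^{m+2}},\qquad \hat K(e^h\wedge f^v)=\hat K(f^h\wedge f^v)=\frac{c^2}{2^{m+2}}.$$ In particular, for $m=\log_2 c$ all three equal $c/4$.
   Context: For $c>0$, $\mathbb{S}^2(c)=\{x\in\mathbb{R}^3:|x|=1/\sqrt c\}$ with the induced metric (curvature $c$). $T^1\mathbb{S}^2(c)=\{(p,v)\in T\mathbb{S}^2(c):|v|=1\}$ is a hypersurface of $T\mathbb{S}^2(c)$. Lifts: for $(p,e)\in T\mathbb{S}^2(c)$ and $X\in T_p\mathbb{S}^2(c)$: - the vertical lift $X^v$ is the velocity at $t=0$ of $t\mapsto(p,e+tX)$ (in $\mathbb{R}^3\times\mathbb{R}^3$); - the horizontal lift $X^h$ is the velocity at $0$ of $t\mapsto(\gamma(t),V(t))$, with $\gamma(0)=p$, $\dot\gamma(0)=X$, and $V$ Levi-Civita parallel along $\gamma$ with $V(0)=e$. Generalized Cheeger–Gromoll metric: for $m\in\mathbb{R}$ and $r\ge0$,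 - $h_{m,r}(X^h,Y^h)=\langle X,Y\rangle$, - $h_{m,r}(X^h,Y^v)=0$, - $h_{m,r}(X^v,Y^v)=\omega^m(\langle X,Y\rangle+r\langle X,e\rangle\langle Y,e\rangle)$, where $\omega=1/(1+|e|^2)$. *)

theory Defs
  imports "HOL-Analysis.Analysis"
begin

definition sphere2 :: "real \<Rightarrow> (real^3) set" where
  "sphere2 c = {x. norm x = 1 / sqrt c}"

definition TS2 :: "real \<Rightarrow> ((real^3) \<times> (real^3)) set" where
  "TS2 c = {(p, v). p \<in> sphere2 c \<and> v \<bullet> p = 0}"

definition T1S2 :: "real \<Rightarrow> ((real^3) \<times> (real^3)) set" where
  "T1S2 c = {(p, v). (p, v) \<in> TS2 c \<and> norm v = 1}"

definition vlift :: "real^3 \<Rightarrow> real^3 \<Rightarrow> real^3 \<Rightarrow> (real^3) \<times> (real^3)" where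
  "vlift p e X = vector_derivative (\<lambda>t. (p, e + t *\<^sub>R X)) (at 0)"

text \<open>Tangential projection onto the tangent plane of the sphere at p; the Levi-Civita
  connection of the induced metric is the tangential part of the ambient derivative.\<close>
definition tproj :: "real^3 \<Rightarrow> real^3 \<Rightarrow> real^3" where
  "tproj p w = w - ((w \<bullet> p) / (p \<bullet> p)) *\<^sub>R p"

definition parallel_along :: "(real \<Rightarrow> real^3) \<Rightarrow> (real \<Rightarrow> real^3) \<Rightarrow> bool" where
  "parallel_along \<gamma> V \<longleftrightarrow>
     (\<forall>t. V differentiable (at t) \<and> V t \<bullet> \<gamma> t = 0
          \<and> tproj (\<gamma> t) (vector_derivative V (at t)) = 0)"

definition is_hlift :: "real \<Rightarrow> real^3 \<Rightarrow> real^3 \<Rightarrow> real^3 \<Rightarrow> (real^3) \<times> (real^3) \<Rightarrow> bool" where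
  "is_hlift c p e X W \<longleftrightarrow>
     (\<exists>\<gamma> V. (\<forall>t. \<gamma> t \<in> sphere2 c \<and> \<gamma> differentiable (at t)) \<and> \<gamma> 0 = p
        \<and> (\<gamma> has_vector_derivative X) (at 0)
        \<and> V 0 = e \<and> parallel_along \<gamma> V
        \<and> ((\<lambda>t. (\<gamma> t, V t)) has_vector_derivative W) (at 0))"

definition hlift :: "real \<Rightarrow> real^3 \<Rightarrow> real^3 \<Rightarrow> real^3 \<Rightarrow> (real^3) \<times> (real^3)" where
  "hlift c p e X = (THE W. is_hlift c p e X W)"

definition lift_coords :: "real \<Rightarrow> real^3 \<Rightarrow> real^3 \<Rightarrow> (real^3) \<times> (real^3) \<Rightarrow> (real^3) \<times> (real^3)" where
  "lift_coords c p e \<xi> = (THE (X, Y). X \<bullet> p = 0 \<and> Y \<bullet> p = 0 \<and> \<xi> = hlift c p e X + vlift p e Y)"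

definition hCG :: "real \<Rightarrow> real \<Rightarrow> real \<Rightarrow> (real^3) \<times> (real^3)
                    \<Rightarrow> (real^3) \<times> (real^3) \<Rightarrow> (real^3) \<times> (real^3) \<Rightarrow> real" where
  "hCG c m r pe \<xi> \<eta> =
     (let p = fst pe; e = snd pe; \<omega> = 1 / (1 + (norm e)\<^sup>2);
          (X, Y) = lift_coords c p e \<xi>; (X', Y') = lift_coords c p e \<eta>
      in X \<bullet> X' + \<omega> powr m * (Y \<bullet> Y' + r * (Y \<bullet> e) * (Y' \<bullet> e)))"

definition partial :: "(real^3 \<Rightarrow> 'b::real_normed_vector) \<Rightarrow> 3 \<Rightarrow> real^3 \<Rightarrow> 'b" where
  "partial F i u = vector_derivative (\<lambda>t. F (u + t *\<^sub>R axis i 1)) (at 0)"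

fun Ck :: "nat \<Rightarrow> (real^3) set \<Rightarrow> (real^3 \<Rightarrow> 'b::real_normed_vector) \<Rightarrow> bool" where
  "Ck 0 U F = continuous_on U F"
| "Ck (Suc k) U F = ((\<forall>u\<in>U. F differentiable (at u)) \<and> (\<forall>i. Ck k U (partial F i)))"

definition smooth_on3 :: "(real^3) set \<Rightarrow> (real^3 \<Rightarrow> 'b::real_normed_vector) \<Rightarrow> bool" where
  "smooth_on3 U F \<longleftrightarrow> (\<forall>k. Ck k U F)"

definition dmap :: "(real^3 \<Rightarrow> 'b::real_normed_vector) \<Rightarrow> real^3 \<Rightarrow> real^3 \<Rightarrow> 'b" where
  "dmap F u a = (\<Sum>i\<in>UNIV. a $ i *\<^sub>R partial F i u)"

type_synonym metric3 = "real^3 \<Rightarrow> real^3^3"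

definition pullback_metric :: "real \<Rightarrow> real \<Rightarrow> real \<Rightarrow> (real^3 \<Rightarrow> (real^3) \<times> (real^3)) \<Rightarrow> metric3" where
  "pullback_metric c m r \<phi> u = (\<chi> i j. hCG c m r (\<phi> u) (partial \<phi> i u) (partial \<phi> j u))"

definition christoffel :: "metric3 \<Rightarrow> 3 \<Rightarrow> 3 \<Rightarrow> 3 \<Rightarrow> real^3 \<Rightarrow> real" where
  "christoffel g k i j u = 1/2 * (\<Sum>l\<in>UNIV. matrix_inv (g u) $ k $ l *
      (partial (\<lambda>v. g v $ j $ l) i u + partial (\<lambda>v. g v $ i $ l) j u - partial (\<lambda>v. g v $ i $ j) l u))"

text \<open>R(d_i,d_j)d_k = sum_l R^l_{ijk} d_l with R(X,Y)Z = nabla_X nabla_Y Z - nabla_Y nabla_X Z - nabla_[X,Y] Z.\<close>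
definition riemann :: "metric3 \<Rightarrow> 3 \<Rightarrow> 3 \<Rightarrow> 3 \<Rightarrow> 3 \<Rightarrow> real^3 \<Rightarrow> real" where
  "riemann g l i j k u =
     partial (\<lambda>v. christoffel g l j k v) i u - partial (\<lambda>v. christoffel g l i k v) j u
     + (\<Sum>n\<in>UNIV. christoffel g n j k u * christoffel g l i n u
                  - christoffel g n i k u * christoffel g l j n u)"

definition gform :: "metric3 \<Rightarrow> real^3 \<Rightarrow> real^3 \<Rightarrow> real^3 \<Rightarrow> real" where
  "gform g u a b = (\<Sum>i\<in>UNIV. \<Sum>j\<in>UNIV. a $ i * b $ j * g u $ i $ j)"

definition sectional_curvature :: "metric3 \<Rightarrow> real^3 \<Rightarrow> real^3 \<Rightarrow> real^3 \<Rightarrow> real" where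
  "sectional_curvature g u a b =
     (\<Sum>i\<in>UNIV. \<Sum>j\<in>UNIV. \<Sum>k\<in>UNIV. \<Sum>l\<in>UNIV. \<Sum>n\<in>UNIV.
        a $ i * b $ j * b $ k * a $ l * riemann g n i j k u * g u $ n $ l)
     / (gform g u a a * gform g u b b - (gform g u a b)\<^sup>2)"

end

theory Submission
  imports Defs
begin

lemma line_vd:
  fixes F :: "real^3 \<Rightarrow> 'b::real_normed_vector"
  assumes "(F has_derivative F') (at (u + t *\<^sub>R v))"
  shows "((\<lambda>s. F (u + s *\<^sub>R v)) has_vector_derivative F' v) (at t)"
proof -
  have l: "((\<lambda>s. u + s *\<^sub>R v) has_derivative (\<lambda>s. s *\<^sub>R v)) (at t)"
    by (auto intro!: derivative_eq_intros)
  have "((F \<circ> (\<lambda>s. u + s *\<^sub>R v)) has_derivative (F' \<circ> (\<lambda>s. s *\<^sub>R v))) (at t)"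
    by (rule diff_chain_at[OF l]) (use assms in simp)
  moreover have "F' \<circ> (\<lambda>s. s *\<^sub>R v) = (\<lambda>s. s *\<^sub>R F' v)"
    using has_derivative_linear[OF assms] by (auto simp: linear_scale o_def)
  ultimately show ?thesis by (simp add: has_vector_derivative_def o_def)
qed

lemma partial_hd:
  fixes F :: "real^3 \<Rightarrow> 'b::real_normed_vector"
  assumes "(F has_derivative F') (at u)"
  shows "partial F i u = F' (axis i 1)"
  unfolding partial_def
  using line_vd[of F F' u 0 "axis i 1"] assms
  by (simp add: vector_derivative_at)

lemma partial_local:
  fixes F G :: "real^3 \<Rightarrow> 'b::real_normed_vector"
  assumes "open S" "u \<in> S" "\<And>v. v \<in> S \<Longrightarrow> F v = G v"
  shows "partial F i u = partial G i u"
proof -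
  have o: "open ((\<lambda>t::real. u + t *\<^sub>R axis i 1) -` S)"
    by (rule continuous_open_vimage[OF assms(1)]) (intro continuous_intros)
  have "eventually (\<lambda>t. u + t *\<^sub>R axis i 1 \<in> S) (nhds (0::real))"
    using eventually_nhds_in_open[OF o] assms(2) by simp
  then have "eventually (\<lambda>t. t \<in> UNIV \<longrightarrow> F (u + t *\<^sub>R axis i 1) = G (u + t *\<^sub>R axis i 1)) (nhds (0::real))"
    by (auto elim!: eventually_mono simp: assms(3))
  then show ?thesis
    unfolding partial_def by (intro vector_derivative_cong_eq) auto
qed

lemma partial_diffble:
  fixes F :: "real^3 \<Rightarrow> 'b::real_normed_vector"
  assumes "F differentiable (at u)"
  shows "(F has_derivative (\<lambda>h. \<Sum>i\<in>UNIV. h $ i *\<^sub>R partial F i u)) (at u)"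
proof -
  obtain F' where F': "(F has_derivative F') (at u)" using assms by (auto simp: differentiable_def)
  have lin: "linear F'" using has_derivative_linear[OF F'] .
  have "F' h = (\<Sum>i\<in>UNIV. h $ i *\<^sub>R partial F i u)" for h
  proof -
    have "h = (\<Sum>i\<in>UNIV. h $ i *\<^sub>R axis i 1)"
      using basis_expansion[of h] by (simp add: scalar_mult_eq_scaleR)
    then have "F' h = F' (\<Sum>i\<in>UNIV. h $ i *\<^sub>R axis i 1)" by simp
    also have "\<dots> = (\<Sum>i\<in>UNIV. h $ i *\<^sub>R F' (axis i 1))"
      using lin by (simp add: linear_sum linear_scale)
    finally show ?thesis using partial_hd[OF F'] by simp
  qed
  then show ?thesis using F' by (metis (no_types, lifting) ext)
qed


lemma partial_linear:
  assumes "bounded_linear L" "F differentiable (at u)"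
  shows "partial (\<lambda>v. L (F v)) i u = L (partial F i u)"
proof -
  obtain F' where F': "(F has_derivative F') (at u)" using assms by (auto simp: differentiable_def)
  have "((\<lambda>v. L (F v)) has_derivative (\<lambda>h. L (F' h))) (at u)"
    using bounded_linear.has_derivative[OF assms(1) F'] .
  from partial_hd[OF this] show ?thesis using partial_hd[OF F'] by simp
qed

lemma partial_bilinear:
  assumes "bounded_bilinear B" "F differentiable (at u)" "G differentiable (at u)"
  shows "partial (\<lambda>v. B (F v) (G v)) i u = B (F u) (partial G i u) + B (partial F i u) (G u)"
proof -
  obtain F' where F': "(F has_derivative F') (at u)" using assms by (auto simp: differentiable_def)
  obtain G' where G': "(G has_derivative G') (at u)" using assms by (auto simp: differentiable_def)
  have "((\<lambda>v. B (F v) (G v)) has_derivative (\<lambda>h. B (F u) (G' h) + B (F' h) (G u))) (at u)"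
    using bounded_bilinear.FDERIV[OF assms(1) F' G'] .
  from partial_hd[OF this] show ?thesis using partial_hd[OF F'] partial_hd[OF G'] by simp
qed

lemma partial_add:
  fixes F G :: "real^3 \<Rightarrow> 'b::real_normed_vector"
  assumes "F differentiable (at u)" "G differentiable (at u)"
  shows "partial (\<lambda>v. F v + G v) i u = partial F i u + partial G i u"
proof -
  obtain F' where F': "(F has_derivative F') (at u)" using assms by (auto simp: differentiable_def)
  obtain G' where G': "(G has_derivative G') (at u)" using assms by (auto simp: differentiable_def)
  have "((\<lambda>v. F v + G v) has_derivative (\<lambda>h. F' h + G' h)) (at u)"
    using has_derivative_add[OF F' G'] .
  from partial_hd[OF this] show ?thesis using partial_hd[OF F'] partial_hd[OF G'] by simp
qed

lemma partial_diff:
  fixes F G :: "real^3 \<Rightarrow> 'b::real_normed_vector"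
  assumes "F differentiable (at u)" "G differentiable (at u)"
  shows "partial (\<lambda>v. F v - G v) i u = partial F i u - partial G i u"
proof -
  obtain F' where F': "(F has_derivative F') (at u)" using assms by (auto simp: differentiable_def)
  obtain G' where G': "(G has_derivative G') (at u)" using assms by (auto simp: differentiable_def)
  have "((\<lambda>v. F v - G v) has_derivative (\<lambda>h. F' h - G' h)) (at u)"
    using has_derivative_diff[OF F' G'] .
  from partial_hd[OF this] show ?thesis using partial_hd[OF F'] partial_hd[OF G'] by simp
qed

lemma partial_const: "partial (\<lambda>v. k) i u = 0"
proof -
  have "((\<lambda>v::real^3. k) has_derivative (\<lambda>h. 0)) (at u)" by simp
  from partial_hd[OF this] show ?thesis by simp
qed

lemma partial_sum:
  fixes F :: "'a \<Rightarrow> real^3 \<Rightarrow> 'b::real_normed_vector"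
  assumes "finite A" "\<And>a. a \<in> A \<Longrightarrow> F a differentiable (at u)"
  shows "partial (\<lambda>v. \<Sum>a\<in>A. F a v) i u = (\<Sum>a\<in>A. partial (F a) i u)"
proof -
  have "\<forall>a\<in>A. \<exists>F'. (F a has_derivative F') (at u)" using assms(2) by (auto simp: differentiable_def)
  then obtain F' where F': "\<And>a. a \<in> A \<Longrightarrow> (F a has_derivative F' a) (at u)" by metis
  have "((\<lambda>v. \<Sum>a\<in>A. F a v) has_derivative (\<lambda>h. \<Sum>a\<in>A. F' a h)) (at u)"
    using has_derivative_sum[of A F F'] F' by auto
  from partial_hd[OF this] show ?thesis by (auto intro!: sum.cong simp: partial_hd[OF F'])
qed

lemma partial_inverse:
  fixes F :: "real^3 \<Rightarrow> real"
  assumes "F differentiable (at u)" "F u \<noteq> 0"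
  shows "partial (\<lambda>v. inverse (F v)) i u = - (partial F i u * (inverse (F u) * inverse (F u)))"
proof -
  obtain F' where F': "(F has_derivative F') (at u)" using assms by (auto simp: differentiable_def)
  have "((\<lambda>v. inverse (F v)) has_derivative (\<lambda>h. - (inverse (F u) * F' h * inverse (F u)))) (at u)"
    using Deriv.has_derivative_inverse[OF assms(2) F'] .
  from partial_hd[OF this] show ?thesis using partial_hd[OF F'] by (simp add: ac_simps)
qed

lemma diffble_inverse:
  fixes F :: "real^3 \<Rightarrow> real"
  assumes "F differentiable (at u)" "F u \<noteq> 0"
  shows "(\<lambda>v. inverse (F v)) differentiable (at u)"
  using assms by (auto simp: differentiable_def intro: Deriv.has_derivative_inverse)


lemma Ck_local:
  fixes F G :: "real^3 \<Rightarrow> 'b::real_normed_vector"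
  assumes "open U" "\<And>v. v \<in> U \<Longrightarrow> F v = G v"
  shows "Ck k U F = Ck k U G"
  using assms(2)
proof (induction k arbitrary: F G)
  case 0
  have "continuous_on U F = continuous_on U G"
    by (rule continuous_on_cong) (auto simp: 0)
  then show ?case by simp
next
  case (Suc k)
  have dd: "F differentiable (at u) \<longleftrightarrow> G differentiable (at u)" if "u \<in> U" for u
  proof
    assume "F differentiable (at u)"
    then obtain D where "(F has_derivative D) (at u)" unfolding differentiable_def by blast
    then have "(G has_derivative D) (at u)"
      by (rule has_derivative_transform_within_open[OF _ assms(1) that]) (simp add: Suc.prems)
    then show "G differentiable (at u)" unfolding differentiable_def by blast
  next
    assume "G differentiable (at u)"
    then obtain D where "(G has_derivative D) (at u)" unfolding differentiable_def by blast
    then have "(F has_derivative D) (at u)"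
      by (rule has_derivative_transform_within_open[OF _ assms(1) that]) (simp add: Suc.prems)
    then show "F differentiable (at u)" unfolding differentiable_def by blast
  qed
  have pp: "Ck k U (partial F i) = Ck k U (partial G i)" for i
  proof (rule Suc.IH)
    fix v assume "v \<in> U"
    show "partial F i v = partial G i v"
      by (rule partial_local[OF assms(1) \<open>v \<in> U\<close>]) (simp add: Suc.prems)
  qed
  show ?case
    unfolding Ck.simps using dd pp by blast
qed


lemma Ck_Suc_mono:
  fixes F :: "real^3 \<Rightarrow> 'b::real_normed_vector"
  shows "Ck (Suc k) U F \<Longrightarrow> Ck k U F"
proof (induction k arbitrary: F)
  case 0
  then have "\<forall>u\<in>U. F differentiable (at u)" by simp
  then have "F differentiable_on U" by (intro differentiable_at_imp_differentiable_on) auto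
  then show ?case by (simp add: differentiable_imp_continuous_on)
next
  case (Suc k)
  from Suc.prems have a: "\<forall>u\<in>U. F differentiable (at u)" and b: "\<And>i. Ck (Suc k) U (partial F i)"
    by simp_all
  from b Suc.IH have "\<And>i. Ck k U (partial F i)" by blast
  with a show ?case by simp
qed

lemma Ck_mono:
  fixes F :: "real^3 \<Rightarrow> 'b::real_normed_vector"
  shows "Ck n U F \<Longrightarrow> k \<le> n \<Longrightarrow> Ck k U F"
proof (induction n)
  case 0 then show ?case by simp
next
  case (Suc n)
  show ?case
  proof (cases "k = Suc n")
    case True then show ?thesis using Suc.prems by simp
  next
    case False
    then have "k \<le> n" using Suc.prems by simp
    moreover have "Ck n U F" using Ck_Suc_mono Suc.prems by blast
    ultimately show ?thesis using Suc.IH by blast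
  qed
qed

lemma Ck_diffble: "Ck (Suc k) U F \<Longrightarrow> u \<in> U \<Longrightarrow> F differentiable (at u)"
  by simp

lemma Ck_partial: "Ck (Suc k) U F \<Longrightarrow> Ck k U (partial F i)"
  by simp

lemma Ck_const: "Ck k U (\<lambda>v. c)"
proof (induction k arbitrary: c)
  case 0 then show ?case by simp
next
  case (Suc k)
  have "partial (\<lambda>v. c) i = (\<lambda>v. 0)" for i by (rule ext) (rule partial_const)
  then show ?case using Suc.IH by simp
qed


lemma Ck_linear:
  fixes F :: "real^3 \<Rightarrow> 'b::real_normed_vector"
  assumes "bounded_linear L" "open U"
  shows "Ck k U F \<Longrightarrow> Ck k U (\<lambda>v. L (F v))"
proof (induction k arbitrary: F)
  case 0
  then have "continuous_on U F" by simp
  then have "continuous_on U (\<lambda>v. L (F v))"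
    using bounded_linear.continuous_on[OF assms(1)] by blast
  then show ?case by simp
next
  case (Suc k)
  from Suc.prems have a: "\<forall>u\<in>U. F differentiable (at u)" and b: "\<And>i. Ck k U (partial F i)"
    by simp_all
  have d: "\<forall>u\<in>U. (\<lambda>v. L (F v)) differentiable (at u)"
  proof
    fix u assume "u \<in> U"
    then obtain D where "(F has_derivative D) (at u)" using a unfolding differentiable_def by blast
    from bounded_linear.has_derivative[OF assms(1) this]
    show "(\<lambda>v. L (F v)) differentiable (at u)" unfolding differentiable_def by blast
  qed
  have "Ck k U (partial (\<lambda>v. L (F v)) i)" for i
  proof -
    have "Ck k U (\<lambda>v. L (partial F i v))" using Suc.IH b by blast
    moreover have "\<And>v. v \<in> U \<Longrightarrow> partial (\<lambda>v. L (F v)) i v = L (partial F i v)"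
      using partial_linear[OF assms(1)] a by blast
    ultimately show ?thesis using Ck_local[OF assms(2), of "partial (\<lambda>v. L (F v)) i" "\<lambda>v. L (partial F i v)" k] by simp
  qed
  then show ?case using d by simp
qed

lemma Ck_add:
  fixes F G :: "real^3 \<Rightarrow> 'b::real_normed_vector"
  assumes "open U"
  shows "Ck k U F \<Longrightarrow> Ck k U G \<Longrightarrow> Ck k U (\<lambda>v. F v + G v)"
proof (induction k arbitrary: F G)
  case 0
  then show ?case by (simp add: continuous_on_add)
next
  case (Suc k)
  from Suc.prems have a: "\<forall>u\<in>U. F differentiable (at u)" and b: "\<And>i. Ck k U (partial F i)"
    and a': "\<forall>u\<in>U. G differentiable (at u)" and b': "\<And>i. Ck k U (partial G i)"
    by simp_all
  have d: "\<forall>u\<in>U. (\<lambda>v. F v + G v) differentiable (at u)"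
    using a a' by (simp add: differentiable_add)
  have "Ck k U (partial (\<lambda>v. F v + G v) i)" for i
  proof -
    have "Ck k U (\<lambda>v. partial F i v + partial G i v)" using Suc.IH b b' by blast
    moreover have "\<And>v. v \<in> U \<Longrightarrow> partial (\<lambda>v. F v + G v) i v = partial F i v + partial G i v"
      using partial_add a a' by blast
    ultimately show ?thesis using Ck_local[OF assms, of "partial (\<lambda>v. F v + G v) i" "\<lambda>v. partial F i v + partial G i v" k] by simp
  qed
  then show ?case using d by simp
qed

lemma Ck_bilinear:
  assumes "bounded_bilinear B" "open U"
  shows "Ck k U F \<Longrightarrow> Ck k U G \<Longrightarrow> Ck k U (\<lambda>v. B (F v) (G v))"
proof (induction k arbitrary: F G)
  case 0
  then show ?case
    using bounded_bilinear.continuous_on[OF assms(1)] by simp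
next
  case (Suc k)
  from Suc.prems have a: "\<forall>u\<in>U. F differentiable (at u)" and b: "\<And>i. Ck k U (partial F i)"
    and a': "\<forall>u\<in>U. G differentiable (at u)" and b': "\<And>i. Ck k U (partial G i)"
    by simp_all
  have F0: "Ck k U F" and G0: "Ck k U G" using Suc.prems Ck_Suc_mono by blast+
  have d: "\<forall>u\<in>U. (\<lambda>v. B (F v) (G v)) differentiable (at u)"
  proof
    fix u assume "u \<in> U"
    then obtain D where D: "(F has_derivative D) (at u)" using a unfolding differentiable_def by blast
    obtain E where E: "(G has_derivative E) (at u)" using a' \<open>u \<in> U\<close> unfolding differentiable_def by blast
    from bounded_bilinear.FDERIV[OF assms(1) D E]
    show "(\<lambda>v. B (F v) (G v)) differentiable (at u)" unfolding differentiable_def by blast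
  qed
  have "Ck k U (partial (\<lambda>v. B (F v) (G v)) i)" for i
  proof -
    have "Ck k U (\<lambda>v. B (F v) (partial G i v))" using Suc.IH F0 b' by blast
    moreover have "Ck k U (\<lambda>v. B (partial F i v) (G v))" using Suc.IH b G0 by blast
    ultimately have "Ck k U (\<lambda>v. B (F v) (partial G i v) + B (partial F i v) (G v))"
      using Ck_add[OF assms(2)] by blast
    moreover have "\<And>v. v \<in> U \<Longrightarrow> partial (\<lambda>v. B (F v) (G v)) i v = B (F v) (partial G i v) + B (partial F i v) (G v)"
      using partial_bilinear[OF assms(1)] a a' by blast
    ultimately show ?thesis using Ck_local[OF assms(2), of "partial (\<lambda>v. B (F v) (G v)) i" "\<lambda>v. B (F v) (partial G i v) + B (partial F i v) (G v)" k] by simp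
  qed
  then show ?case using d by simp
qed

lemma Ck_mult:
  fixes F G :: "real^3 \<Rightarrow> real"
  shows "open U \<Longrightarrow> Ck k U F \<Longrightarrow> Ck k U G \<Longrightarrow> Ck k U (\<lambda>v. F v * G v)"
  using Ck_bilinear[OF bounded_bilinear_mult] by blast

lemma Ck_scaleR:
  fixes F :: "real^3 \<Rightarrow> real" and G :: "real^3 \<Rightarrow> 'b::real_normed_vector"
  shows "open U \<Longrightarrow> Ck k U F \<Longrightarrow> Ck k U G \<Longrightarrow> Ck k U (\<lambda>v. F v *\<^sub>R G v)"
  using Ck_bilinear[OF bounded_bilinear_scaleR] by blast

lemma Ck_inner:
  fixes F G :: "real^3 \<Rightarrow> 'b::real_inner"
  shows "open U \<Longrightarrow> Ck k U F \<Longrightarrow> Ck k U G \<Longrightarrow> Ck k U (\<lambda>v. F v \<bullet> G v)"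
  using Ck_bilinear[OF bounded_bilinear_inner] by blast

lemma Ck_minus:
  fixes F :: "real^3 \<Rightarrow> 'b::real_normed_vector"
  shows "open U \<Longrightarrow> Ck k U F \<Longrightarrow> Ck k U (\<lambda>v. - F v)"
  using Ck_linear[OF bounded_linear_minus[OF bounded_linear_ident]] by blast

lemma Ck_diff:
  fixes F G :: "real^3 \<Rightarrow> 'b::real_normed_vector"
  assumes "open U" "Ck k U F" "Ck k U G"
  shows "Ck k U (\<lambda>v. F v - G v)"
proof -
  have "Ck k U (\<lambda>v. F v + - G v)" using Ck_add[OF assms(1) assms(2) Ck_minus[OF assms(1,3)]] .
  then show ?thesis by simp
qed

lemma Ck_sum:
  fixes F :: "'a \<Rightarrow> real^3 \<Rightarrow> 'b::real_normed_vector"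
  assumes "open U" "finite A"
  shows "(\<And>a. a \<in> A \<Longrightarrow> Ck k U (F a)) \<Longrightarrow> Ck k U (\<lambda>v. \<Sum>a\<in>A. F a v)"
  using assms(2)
proof (induction A rule: finite_induct)
  case empty then show ?case using Ck_const by simp
next
  case (insert x A)
  have "Ck k U (\<lambda>v. F x v + (\<Sum>a\<in>A. F a v))"
    using Ck_add[OF assms(1)] insert by blast
  then show ?case using insert by simp
qed

lemma Ck_inverse:
  fixes F :: "real^3 \<Rightarrow> real"
  assumes "open U"
  shows "Ck k U F \<Longrightarrow> (\<And>v. v \<in> U \<Longrightarrow> F v \<noteq> 0) \<Longrightarrow> Ck k U (\<lambda>v. inverse (F v))"
proof (induction k arbitrary: F)
  case 0
  then show ?case by (auto intro!: continuous_on_inverse)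
next
  case (Suc k)
  from Suc.prems have a: "\<forall>u\<in>U. F differentiable (at u)" and b: "\<And>i. Ck k U (partial F i)"
    by simp_all
  have d: "\<forall>u\<in>U. (\<lambda>v. inverse (F v)) differentiable (at u)"
    using a Suc.prems(2) diffble_inverse by blast
  have "Ck k U (partial (\<lambda>v. inverse (F v)) i)" for i
  proof -
    have I: "Ck k U (\<lambda>v. inverse (F v))" using Suc.IH[of F] Suc.prems Ck_Suc_mono by blast
    have "Ck k U (\<lambda>v. inverse (F v) * inverse (F v))" using Ck_mult[OF assms I I] .
    then have "Ck k U (\<lambda>v. partial F i v * (inverse (F v) * inverse (F v)))" using Ck_mult[OF assms b] by blast
    then have "Ck k U (\<lambda>v. - (partial F i v * (inverse (F v) * inverse (F v))))"
      using Ck_minus[OF assms] by blast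
    moreover have "\<And>v. v \<in> U \<Longrightarrow> partial (\<lambda>v. inverse (F v)) i v = - (partial F i v * (inverse (F v) * inverse (F v)))"
      using partial_inverse a Suc.prems(2) by blast
    ultimately show ?thesis using Ck_local[OF assms, of "partial (\<lambda>v. inverse (F v)) i" "\<lambda>v. - (partial F i v * (inverse (F v) * inverse (F v)))" k] by simp
  qed
  then show ?case using d by simp
qed

lemma line_deriv_real:
  fixes F :: "real^3 \<Rightarrow> real"
  assumes "F differentiable (at (v + s *\<^sub>R axis i 1))"
  shows "((\<lambda>s. F (v + s *\<^sub>R axis i 1)) has_real_derivative partial F i (v + s *\<^sub>R axis i 1)) (at s)"
proof -
  obtain D where D: "(F has_derivative D) (at (v + s *\<^sub>R axis i 1))"
    using assms unfolding differentiable_def by blast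
  have "((\<lambda>s. F (v + s *\<^sub>R axis i 1)) has_vector_derivative D (axis i 1)) (at s)"
    using line_vd[OF D] .
  then show ?thesis using partial_hd[OF D]
    by (simp add: has_real_derivative_iff_has_vector_derivative)
qed

lemma second_diff:
  fixes F :: "real^3 \<Rightarrow> real"
  assumes U: "open U" and C: "Ck 2 U F" and h: "h > 0"
    and inU: "\<And>s t. 0 \<le> s \<Longrightarrow> s \<le> h \<Longrightarrow> 0 \<le> t \<Longrightarrow> t \<le> h \<Longrightarrow> u + s *\<^sub>R axis i 1 + t *\<^sub>R axis j 1 \<in> U"
  shows "\<exists>s t. 0 < s \<and> s < h \<and> 0 < t \<and> t < h \<and>
     F (u + h *\<^sub>R axis i 1 + h *\<^sub>R axis j 1) - F (u + h *\<^sub>R axis i 1) - F (u + h *\<^sub>R axis j 1) + F u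
       = h * h * partial (partial F i) j (u + s *\<^sub>R axis i 1 + t *\<^sub>R axis j 1)"
proof -
  have dF: "F differentiable (at v)" if "v \<in> U" for v using C that by (simp add: numeral_2_eq_2)
  have dFi: "partial F i differentiable (at v)" if "v \<in> U" for v using C that by (simp add: numeral_2_eq_2)
  define G where "G s = F ((u + h *\<^sub>R axis j 1) + s *\<^sub>R axis i 1) - F (u + s *\<^sub>R axis i 1)" for s
  define G' where "G' s = partial F i ((u + h *\<^sub>R axis j 1) + s *\<^sub>R axis i 1) - partial F i (u + s *\<^sub>R axis i 1)" for s
  have dG: "DERIV G s :> G' s"
    if "0 \<le> s" "s \<le> h" for s
  proof -
    have m1: "(u + h *\<^sub>R axis j 1) + s *\<^sub>R axis i 1 \<in> U" using inU[of s h] that h by (simp add: add_ac)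
    have m2: "u + s *\<^sub>R axis i 1 \<in> U" using inU[of s 0] that h by simp
    show ?thesis unfolding G_def G'_def
      by (intro DERIV_diff line_deriv_real dF m1 m2)
  qed
  obtain s where s: "0 < s" "s < h" "G h - G 0 = (h - 0) * G' s"
    using MVT2[OF h, of G G', OF dG] by auto
  define H where "H t = partial F i ((u + s *\<^sub>R axis i 1) + t *\<^sub>R axis j 1)" for t
  define H' where "H' t = partial (partial F i) j ((u + s *\<^sub>R axis i 1) + t *\<^sub>R axis j 1)" for t
  have dH: "DERIV H t :> H' t"
    if "0 \<le> t" "t \<le> h" for t
  proof -
    have m1: "(u + s *\<^sub>R axis i 1) + t *\<^sub>R axis j 1 \<in> U" using inU[of s t] that s by simp
    show ?thesis unfolding H_def H'_def by (intro line_deriv_real dFi m1)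
  qed
  obtain t where t: "0 < t" "t < h" "H h - H 0 = (h - 0) * H' t"
    using MVT2[OF h, of H H', OF dH] by auto
  have HH: "H h - H 0 = partial F i ((u + h *\<^sub>R axis j 1) + s *\<^sub>R axis i 1) - partial F i (u + s *\<^sub>R axis i 1)"
    unfolding H_def by (simp add: add_ac)
  have GG: "G h - G 0 = F (u + h *\<^sub>R axis i 1 + h *\<^sub>R axis j 1) - F (u + h *\<^sub>R axis i 1) - F (u + h *\<^sub>R axis j 1) + F u"
    unfolding G_def by (simp add: add_ac)
  have "G h - G 0 = h * (H h - H 0)" using s(3) HH by (simp add: G'_def)
  also have "\<dots> = h * h * partial (partial F i) j (u + s *\<^sub>R axis i 1 + t *\<^sub>R axis j 1)"
    using t(3) by (simp add: H'_def)
  finally have eq: "F (u + h *\<^sub>R axis i 1 + h *\<^sub>R axis j 1) - F (u + h *\<^sub>R axis i 1) - F (u + h *\<^sub>R axis j 1) + F u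
       = h * h * partial (partial F i) j (u + s *\<^sub>R axis i 1 + t *\<^sub>R axis j 1)"
    using GG by simp
  show ?thesis by (rule exI[of _ s], rule exI[of _ t]) (use s t eq in simp)
qed

lemma schwarz_real:
  fixes F :: "real^3 \<Rightarrow> real"
  assumes U: "open U" and u: "u \<in> U" and C: "Ck 2 U F"
  shows "partial (partial F i) j u = partial (partial F j) i u"
proof (rule ccontr)
  define A where "A = partial (partial F i) j"
  define B where "B = partial (partial F j) i"
  assume ne: "partial (partial F i) j u \<noteq> partial (partial F j) i u"
  define e where "e = \<bar>A u - B u\<bar> / 3"
  have e: "e > 0" using ne by (simp add: e_def A_def B_def)
  have cA: "continuous_on U A" using C by (simp add: numeral_2_eq_2 A_def)
  have cB: "continuous_on U B" using C by (simp add: numeral_2_eq_2 B_def)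
  have iA: "isCont A u" using cA U u continuous_on_eq_continuous_at by blast
  have iB: "isCont B u" using cB U u continuous_on_eq_continuous_at by blast
  have "\<exists>d>0. \<forall>v. dist v u < d \<longrightarrow> dist (A v) (A u) < e"
    using iA e unfolding continuous_at_eps_delta by blast
  then obtain d1 where d1: "d1 > 0" "\<And>v. dist v u < d1 \<Longrightarrow> dist (A v) (A u) < e" by blast
  have "\<exists>d>0. \<forall>v. dist v u < d \<longrightarrow> dist (B v) (B u) < e"
    using iB e unfolding continuous_at_eps_delta by blast
  then obtain d2 where d2: "d2 > 0" "\<And>v. dist v u < d2 \<Longrightarrow> dist (B v) (B u) < e" by blast
  obtain d3 where d3: "d3 > 0" "ball u d3 \<subseteq> U"
    using U u open_contains_ball by blast
  define h where "h = min d1 (min d2 d3) / 3"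
  have h: "h > 0" using d1 d2 d3 by (simp add: h_def)
  have close: "dist (u + s *\<^sub>R axis a (1::real) + t *\<^sub>R axis b (1::real)) u < min d1 (min d2 d3)"
    if "0 \<le> s" "s \<le> h" "0 \<le> t" "t \<le> h" for s t and a b :: 3
  proof -
    have "dist (u + s *\<^sub>R axis a (1::real) + t *\<^sub>R axis b (1::real)) u = norm (s *\<^sub>R axis a (1::real) + t *\<^sub>R axis b (1::real))"
      by (simp add: dist_norm)
    also have "\<dots> \<le> norm (s *\<^sub>R axis a (1::real)) + norm (t *\<^sub>R axis b (1::real))" by (rule norm_triangle_ineq)
    also have "\<dots> = \<bar>s\<bar> + \<bar>t\<bar>" by simp
    also have "\<dots> \<le> 2 * h" using that by simp
    also have "\<dots> < min d1 (min d2 d3)" using d1 d2 d3 by (simp add: h_def min_def)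
    finally show ?thesis .
  qed
  have inU: "u + s *\<^sub>R axis a (1::real) + t *\<^sub>R axis b (1::real) \<in> U"
    if "0 \<le> s" "s \<le> h" "0 \<le> t" "t \<le> h" for s t and a b :: 3
    using close[OF that, of a b] d3(2) by (auto simp: dist_commute)
  obtain s t where st: "0 < s" "s < h" "0 < t" "t < h"
     "F (u + h *\<^sub>R axis i 1 + h *\<^sub>R axis j 1) - F (u + h *\<^sub>R axis i 1) - F (u + h *\<^sub>R axis j 1) + F u
       = h * h * A (u + s *\<^sub>R axis i 1 + t *\<^sub>R axis j 1)"
    using second_diff[OF U C h, of u i j] inU unfolding A_def by blast
  obtain s' t' where st': "0 < s'" "s' < h" "0 < t'" "t' < h"
     "F (u + h *\<^sub>R axis j 1 + h *\<^sub>R axis i 1) - F (u + h *\<^sub>R axis j 1) - F (u + h *\<^sub>R axis i 1) + F u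
       = h * h * B (u + s' *\<^sub>R axis j 1 + t' *\<^sub>R axis i 1)"
    using second_diff[OF U C h, of u j i] inU unfolding B_def by blast
  have "h * h * A (u + s *\<^sub>R axis i 1 + t *\<^sub>R axis j 1) = h * h * B (u + s' *\<^sub>R axis j 1 + t' *\<^sub>R axis i 1)"
  proof -
    have pe: "u + h *\<^sub>R axis j 1 + h *\<^sub>R axis i 1 = u + h *\<^sub>R axis i 1 + h *\<^sub>R axis j 1" by (simp add: add_ac)
    show ?thesis using st(5) st'(5) unfolding pe by linarith
  qed
  then have eq: "A (u + s *\<^sub>R axis i 1 + t *\<^sub>R axis j 1) = B (u + s' *\<^sub>R axis j 1 + t' *\<^sub>R axis i 1)"
    using h by simp
  have "dist (A (u + s *\<^sub>R axis i 1 + t *\<^sub>R axis j 1)) (A u) < e"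
    using d1(2) close[of s t i j] st by simp
  moreover have "dist (B (u + s' *\<^sub>R axis j 1 + t' *\<^sub>R axis i 1)) (B u) < e"
    using d2(2) close[of s' t' j i] st' by simp
  ultimately have "\<bar>A u - B u\<bar> < 2 * e" using eq by (simp add: dist_real_def)
  then show False using e by (simp add: e_def)
qed

lemma num3_simps: "(1::3) + 1 = 2" "(1::3) + 2 = 3" "(2::3) + 1 = 3" "(2::3) + 2 = 1" "(3::3) + 1 = 1" "(3::3) + 2 = 2"
  "(4::3) = 1" "(5::3) = 2" "(6::3) = 3"
  "(1::3) \<noteq> 2" "(1::3) \<noteq> 3" "(2::3) \<noteq> 3" "(2::3) \<noteq> 1" "(3::3) \<noteq> 1" "(3::3) \<noteq> 2"
  by simp_all

lemma matrix_inv_eq: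
  fixes A B :: "real^'n^'n"
  assumes "A ** B = mat 1"
  shows "matrix_inv A = B"
proof -
  have BA: "B ** A = mat 1" using assms matrix_left_right_inverse by blast
  have "\<exists>A'. A ** A' = mat 1 \<and> A' ** A = mat 1" using assms BA by blast
  then have C: "A ** matrix_inv A = mat 1 \<and> matrix_inv A ** A = mat 1"
    unfolding matrix_inv_def by (rule someI_ex)
  have "matrix_inv A = matrix_inv A ** (A ** B)" using assms by simp
  also have "\<dots> = (matrix_inv A ** A) ** B" by (simp add: matrix_mul_assoc)
  also have "\<dots> = B" using C by simp
  finally show ?thesis .
qed

definition adj3 :: "real^3^3 \<Rightarrow> real^3^3" where
  "adj3 M = (\<chi> i j. M$(j+1)$(i+1) * M$(j+2)$(i+2) - M$(j+1)$(i+2) * M$(j+2)$(i+1))"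

lemma adj3_mult: "M ** adj3 M = det M *\<^sub>R mat 1"
  unfolding adj3_def
  by (simp add: vec_eq_iff forall_3 matrix_matrix_mult_def sum_3 det_3 mat_def num3_simps algebra_simps)

lemma matrix_inv_adj3:
  assumes "det M \<noteq> 0"
  shows "matrix_inv M = (1 / det M) *\<^sub>R adj3 M"
proof (rule matrix_inv_eq)
  have "M ** ((1 / det M) *\<^sub>R adj3 M) = (1 / det M) *\<^sub>R (M ** adj3 M)"
    by (simp add: vec_eq_iff matrix_matrix_mult_def sum_distrib_left algebra_simps)
  also have "\<dots> = mat 1" using assms by (simp add: adj3_mult)
  finally show "M ** ((1 / det M) *\<^sub>R adj3 M) = mat 1" .
qed

definition eps :: "3 \<Rightarrow> 3 \<Rightarrow> 3 \<Rightarrow> real" where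
  "eps p q s = (if q = p + 1 \<and> s = p + 2 then 1 else if q = p + 2 \<and> s = p + 1 then -1 else 0)"

definition Lc :: "(3 \<Rightarrow> real) \<Rightarrow> 3 \<Rightarrow> 3 \<Rightarrow> 3 \<Rightarrow> real" where
  "Lc D s p q = eps p q s * (D p - D q - D s) / (2 * D s)"


lemma eps_vals: "eps 1 2 3 = 1" "eps 2 3 1 = 1" "eps 3 1 2 = 1" "eps 1 3 2 = -1" "eps 3 2 1 = -1" "eps 2 1 3 = -1"
  "eps 1 1 a = 0" "eps 2 2 a = 0" "eps 3 3 a = 0" "eps 1 a 1 = 0" "eps 2 a 2 = 0" "eps 3 a 3 = 0"
  "eps a 1 1 = 0" "eps a 2 2 = 0" "eps a 3 3 = 0"
  using exhaust_3[of a] by (auto simp: eps_def num3_simps)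

lemma coreA:
  fixes D wi wj wl dij dil dji djl dli dlj :: "3 \<Rightarrow> real"
  assumes Dnz: "\<And>a. D a \<noteq> 0"
   and s1: "\<And>a. dji a = dij a - (wi (a+1) * wj (a+2) - wj (a+1) * wi (a+2))"
   and s2: "\<And>a. dli a = dil a - (wi (a+1) * wl (a+2) - wl (a+1) * wi (a+2))"
   and s3: "\<And>a. dlj a = djl a - (wj (a+1) * wl (a+2) - wl (a+1) * wj (a+2))"
  shows "1/2 * ((\<Sum>a\<in>UNIV. D a * (wj a * dil a + dij a * wl a)) + (\<Sum>a\<in>UNIV. D a * (wi a * djl a + dji a * wl a))
            - (\<Sum>a\<in>UNIV. D a * (wi a * dlj a + dli a * wj a)))
       = (\<Sum>a\<in>UNIV. D a * wl a * (dij a + (\<Sum>p\<in>UNIV. \<Sum>q\<in>UNIV. Lc D a p q * (wi p * wj q))))"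
proof -
  have D1: "D 1 \<noteq> 0" and D2: "D 2 \<noteq> 0" and D3: "D 3 \<noteq> 0" using Dnz by auto
  show ?thesis
    unfolding s1 s2 s3
    by (simp add: sum_3 Lc_def eps_vals num3_simps field_simps D1 D2 D3)
qed


definition Tc :: "(3 \<Rightarrow> 3 \<Rightarrow> 3 \<Rightarrow> real) \<Rightarrow> 3 \<Rightarrow> 3 \<Rightarrow> 3 \<Rightarrow> 3 \<Rightarrow> real" where
  "Tc L a x y z = (\<Sum>p\<in>UNIV. L a p z * eps p x y) + (\<Sum>q\<in>UNIV. L a x q * L q y z - L a y q * L q x z)"

lemma coreB:
  fixes L :: "3 \<Rightarrow> 3 \<Rightarrow> 3 \<Rightarrow> real" and wi wj wk dij dji dik djk :: "3 \<Rightarrow> real" and a :: 3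
    and ddi ddj :: real
  assumes "ddj = ddi"
    and s: "\<And>p. dji p = dij p - (wi (p+1) * wj (p+2) - wj (p+1) * wi (p+2))"
  shows "(ddi + (\<Sum>p\<in>UNIV. \<Sum>q\<in>UNIV. L a p q * (wj p * dik q + dij p * wk q)))
       - (ddj + (\<Sum>p\<in>UNIV. \<Sum>q\<in>UNIV. L a p q * (wi p * djk q + dji p * wk q)))
       + (\<Sum>q\<in>UNIV. (\<Sum>p\<in>UNIV. L a p q * wi p) * (djk q + (\<Sum>r\<in>UNIV. \<Sum>s\<in>UNIV. L q r s * (wj r * wk s))))
       - (\<Sum>q\<in>UNIV. (\<Sum>p\<in>UNIV. L a p q * wj p) * (dik q + (\<Sum>r\<in>UNIV. \<Sum>s\<in>UNIV. L q r s * (wi r * wk s))))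
     = (\<Sum>x\<in>UNIV. \<Sum>y\<in>UNIV. \<Sum>z\<in>UNIV. Tc L a x y z * (wi x * wj y * wk z))"
  unfolding assms(1) s
  by (simp add: sum_3 Tc_def eps_vals num3_simps algebra_simps)

lemma partial_comp:
  fixes F :: "real^3 \<Rightarrow> real^'n"
  assumes "F differentiable (at v)"
  shows "partial (\<lambda>v. F v $ i) l v = partial F l v $ i"
  using partial_linear[OF bounded_linear_vec_nth assms] .

lemma partial_mult:
  fixes f g :: "real^3 \<Rightarrow> real"
  assumes "f differentiable (at v)" "g differentiable (at v)"
  shows "partial (\<lambda>v. f v * g v) l v = f v * partial g l v + partial f l v * g v"
  using partial_bilinear[OF bounded_bilinear_mult assms] .

lemma partial_cmult:
  fixes f :: "real^3 \<Rightarrow> real"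
  assumes "f differentiable (at v)"
  shows "partial (\<lambda>v. c * f v) l v = c * partial f l v"
  using partial_mult[of "\<lambda>v. c" v f l] assms by (simp add: partial_const)

lemma Ck_comp:
  fixes F :: "real^3 \<Rightarrow> real^'n"
  shows "open U \<Longrightarrow> Ck k U F \<Longrightarrow> Ck k U (\<lambda>v. F v $ i)"
  using Ck_linear[OF bounded_linear_vec_nth] by blast

lemma Ck_diffble': "Ck k U F \<Longrightarrow> 0 < k \<Longrightarrow> v \<in> U \<Longrightarrow> F differentiable (at v)"
  by (cases k) auto

locale frame =
  fixes U :: "(real^3) set" and u0 :: "real^3" and w :: "3 \<Rightarrow> real^3 \<Rightarrow> real^3"
    and D :: "3 \<Rightarrow> real" and g :: metric3
  assumes U: "open U" and u0: "u0 \<in> U"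
    and wC: "\<And>a. Ck 3 U (w a)"
    and Dnz: "\<And>a. D a \<noteq> 0"
    and gdef: "\<And>v. v \<in> U \<Longrightarrow> g v = (\<chi> i j. \<Sum>a\<in>UNIV. D a * (w a v $ i * w a v $ j))"
    and struct: "\<And>v a i j. v \<in> U \<Longrightarrow> partial (w a) i v $ j - partial (w a) j v $ i
                  = w (a+1) v $ i * w (a+2) v $ j - w (a+1) v $ j * w (a+2) v $ i"
    and detnz: "\<And>v. v \<in> U \<Longrightarrow> det (\<chi> a i. w a v $ i) \<noteq> 0"
begin

definition "Wm v = (\<chi> a i. w a v $ i)"
definition "Nf a i j v = (\<Sum>p\<in>UNIV. \<Sum>q\<in>UNIV. Lc D a p q * (w p v $ i * w q v $ j))"
definition "Gt a i j v = partial (w a) i v $ j + Nf a i j v"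

lemma Cw: "Ck 3 U (\<lambda>v. w a v $ i)"
  using Ck_comp[OF U wC] .

lemma Cdw: "Ck 2 U (\<lambda>v. partial (w a) i v $ j)"
proof -
  have "Ck 2 U (partial (w a) i)" using wC[of a] by (simp add: numeral_3_eq_3 numeral_2_eq_2)
  then show ?thesis using Ck_comp[OF U] by blast
qed

lemma dw_diff: "v \<in> U \<Longrightarrow> w a differentiable (at v)"
  using Ck_diffble'[OF wC] by simp

lemma dwc_diff: "v \<in> U \<Longrightarrow> (\<lambda>v. w a v $ i) differentiable (at v)"
  using Ck_diffble'[OF Cw] by simp

lemma ddwc_diff: "v \<in> U \<Longrightarrow> (\<lambda>v. partial (w a) i v $ j) differentiable (at v)"
  using Ck_diffble'[OF Cdw] by simp

lemma dg: 
  assumes v: "v \<in> U"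
  shows "partial (\<lambda>v. g v $ i $ j) l v
     = (\<Sum>a\<in>UNIV. D a * (w a v $ i * (partial (w a) l v $ j) + (partial (w a) l v $ i) * w a v $ j))"
proof -
  have "partial (\<lambda>v. g v $ i $ j) l v = partial (\<lambda>v. \<Sum>a\<in>UNIV. D a * (w a v $ i * w a v $ j)) l v"
    by (rule partial_local[OF U v]) (simp add: gdef)
  also have "\<dots> = (\<Sum>a\<in>UNIV. partial (\<lambda>v. D a * (w a v $ i * w a v $ j)) l v)"
    by (rule partial_sum) (use dwc_diff[OF v] in auto)
  also have "\<dots> = (\<Sum>a\<in>UNIV. D a * (w a v $ i * (partial (w a) l v $ j) + (partial (w a) l v $ i) * w a v $ j))"
  proof (rule sum.cong[OF refl])
    fix a
    have "partial (\<lambda>v. D a * (w a v $ i * w a v $ j)) l v = D a * partial (\<lambda>v. w a v $ i * w a v $ j) l v"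
      by (rule partial_cmult) (use dwc_diff[OF v] in auto)
    also have "\<dots> = D a * (w a v $ i * (partial (w a) l v $ j) + (partial (w a) l v $ i) * w a v $ j)"
      by (simp add: partial_mult dwc_diff[OF v] partial_comp dw_diff[OF v])
    finally show "partial (\<lambda>v. D a * (w a v $ i * w a v $ j)) l v = D a * (w a v $ i * (partial (w a) l v $ j) + (partial (w a) l v $ i) * w a v $ j)" .
  qed
  finally show ?thesis .
qed


definition "Dm = (\<chi> i j. if i = j then D i else 0)"
definition "Dinv = (\<chi> i j. if i = j then 1 / D i else 0)"
definition "Z v = matrix_inv (Wm v)"
definition "Ginv v = Z v ** Dinv ** transpose (Z v)"

lemma DmDinv: "Dm ** Dinv = mat 1" "Dinv ** Dm = mat 1"
  by (simp_all add: vec_eq_iff forall_3 sum_3 matrix_matrix_mult_def mat_def Dm_def Dinv_def Dnz)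

lemma WZ:
  assumes v: "v \<in> U"
  shows "Wm v ** Z v = mat 1" "Z v ** Wm v = mat 1"
proof -
  have "invertible (Wm v)" using detnz[OF v] invertible_det_nz unfolding Wm_def by blast
  then obtain B where B: "Wm v ** B = mat 1" "B ** Wm v = mat 1" unfolding invertible_def by blast
  then have "Z v = B" unfolding Z_def by (intro matrix_inv_eq)
  then show "Wm v ** Z v = mat 1" "Z v ** Wm v = mat 1" using B by simp_all
qed

lemma g_mat:
  assumes v: "v \<in> U"
  shows "g v = transpose (Wm v) ** Dm ** Wm v"
  unfolding gdef[OF v]
  by (simp add: vec_eq_iff matrix_matrix_mult_def transpose_def Dm_def Wm_def if_distrib
      sum.delta' mult.assoc cong: if_cong) (auto intro!: sum.cong simp: mult_ac)

lemma ginv: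
  assumes v: "v \<in> U"
  shows "matrix_inv (g v) = Ginv v"
proof (rule matrix_inv_eq)
  have "g v ** Ginv v = transpose (Wm v) ** Dm ** (Wm v ** Z v) ** Dinv ** transpose (Z v)"
    unfolding g_mat[OF v] Ginv_def by (simp add: matrix_mul_assoc)
  also have "\<dots> = transpose (Wm v) ** transpose (Z v)"
    by (simp add: WZ[OF v] DmDinv matrix_mul_assoc[symmetric])
  also have "\<dots> = transpose (Z v ** Wm v)" by (simp add: matrix_transpose_mul)
  also have "\<dots> = mat 1" by (simp add: WZ[OF v])
  finally show "g v ** Ginv v = mat 1" .
qed

lemma comb:
  assumes v: "v \<in> U"
  shows "1/2 * (partial (\<lambda>v. g v $ j $ l) i v + partial (\<lambda>v. g v $ i $ l) j v - partial (\<lambda>v. g v $ i $ j) l v)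
     = (\<Sum>a\<in>UNIV. D a * w a v $ l * Gt a i j v)"
proof -
  have s: "\<And>a x y. partial (w a) y v $ x = partial (w a) x v $ y - (w (a+1) v $ x * w (a+2) v $ y - w (a+1) v $ y * w (a+2) v $ x)"
    using struct[OF v] by (simp add: algebra_simps)
  show ?thesis unfolding dg[OF v] Gt_def Nf_def
    by (rule coreA[OF Dnz s s s])
qed

lemma chris:
  assumes v: "v \<in> U"
  shows "christoffel g k i j v = (\<Sum>a\<in>UNIV. Z v $ k $ a * Gt a i j v)"
proof -
  define G where "G = (\<chi> a. Gt a i j v)"
  have "christoffel g k i j v = (\<Sum>l\<in>UNIV. Ginv v $ k $ l * (1/2 * (partial (\<lambda>v. g v $ j $ l) i v + partial (\<lambda>v. g v $ i $ l) j v - partial (\<lambda>v. g v $ i $ j) l v)))"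
    unfolding christoffel_def ginv[OF v] by (simp add: sum_distrib_left mult_ac)
  also have "\<dots> = (\<Sum>l\<in>UNIV. Ginv v $ k $ l * (\<Sum>a\<in>UNIV. D a * w a v $ l * Gt a i j v))"
    by (rule sum.cong[OF refl]) (simp only: comb[OF v])
  also have "\<dots> = (Ginv v *v (transpose (Wm v) ** Dm *v G)) $ k"
    by (simp add: matrix_vector_mult_def matrix_matrix_mult_def transpose_def Dm_def Wm_def G_def
        if_distrib sum.delta' mult_ac cong: if_cong)
  also have "\<dots> = ((Z v ** Dinv ** (transpose (Wm v ** Z v)) ** Dm) *v G) $ k"
    by (simp add: Ginv_def matrix_vector_mul_assoc matrix_mul_assoc matrix_transpose_mul)
  also have "\<dots> = (Z v *v G) $ k"
    by (simp add: WZ[OF v] matrix_mul_assoc[symmetric] DmDinv)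
  also have "\<dots> = (\<Sum>a\<in>UNIV. Z v $ k $ a * Gt a i j v)"
    by (simp add: matrix_vector_mult_def G_def)
  finally show ?thesis .
qed

lemma WGam:
  assumes v: "v \<in> U"
  shows "(\<Sum>n\<in>UNIV. w a v $ n * christoffel g n j k v) = Gt a j k v"
proof -
  define G where "G = (\<chi> a. Gt a j k v)"
  have "(\<Sum>n\<in>UNIV. w a v $ n * christoffel g n j k v) = (Wm v *v (Z v *v G)) $ a"
    by (simp add: chris[OF v] matrix_vector_mult_def Wm_def G_def)
  also have "\<dots> = G $ a" by (simp add: matrix_vector_mul_assoc WZ[OF v])
  finally show ?thesis by (simp add: G_def)
qed


lemmas Ck_intros = Ck_add[OF U] Ck_diff[OF U] Ck_mult[OF U] Ck_const Cw

lemma C_det: "Ck 3 U (\<lambda>v. det (Wm v))"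
  unfolding Wm_def det_3 by (simp, intro Ck_intros)

lemma C_adj: "Ck 3 U (\<lambda>v. adj3 (Wm v) $ k $ a)"
  unfolding Wm_def adj3_def by (simp, intro Ck_intros)

lemma C_Z: "Ck 3 U (\<lambda>v. Z v $ k $ a)"
proof -
  have "Ck 3 U (\<lambda>v. inverse (det (Wm v)) * adj3 (Wm v) $ k $ a)"
    by (intro Ck_intros C_adj Ck_inverse[OF U] C_det) (use detnz in \<open>simp add: Wm_def\<close>)
  moreover have "Z v $ k $ a = inverse (det (Wm v)) * adj3 (Wm v) $ k $ a" if "v \<in> U" for v
    unfolding Z_def using matrix_inv_adj3[OF detnz[OF that]] by (simp add: Wm_def divide_inverse)
  ultimately show ?thesis
    using Ck_local[OF U, of "\<lambda>v. Z v $ k $ a" "\<lambda>v. inverse (det (Wm v)) * adj3 (Wm v) $ k $ a" 3] by simp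
qed

lemma C_Nf: "Ck 3 U (\<lambda>v. Nf a i j v)"
  unfolding Nf_def by (intro Ck_sum[OF U] Ck_intros) auto

lemma C_Gt: "Ck 2 U (\<lambda>v. Gt a i j v)"
  unfolding Gt_def by (intro Ck_intros Cdw Ck_mono[OF C_Nf]) auto

lemma C_chris: "Ck 2 U (\<lambda>v. christoffel g k i j v)"
proof -
  have "Ck 2 U (\<lambda>v. \<Sum>a\<in>UNIV. Z v $ k $ a * Gt a i j v)"
    by (intro Ck_sum[OF U] Ck_intros C_Gt Ck_mono[OF C_Z]) auto
  then show ?thesis
    using Ck_local[OF U, of "\<lambda>v. christoffel g k i j v" "\<lambda>v. \<Sum>a\<in>UNIV. Z v $ k $ a * Gt a i j v" 2] chris by simp
qed

lemma chris_diff: "v \<in> U \<Longrightarrow> (\<lambda>v. christoffel g k i j v) differentiable (at v)"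
  using Ck_diffble'[OF C_chris] by simp

lemma Gt_diff: "v \<in> U \<Longrightarrow> (\<lambda>v. Gt a i j v) differentiable (at v)"
  using Ck_diffble'[OF C_Gt] by simp

lemma B1:
  "(\<Sum>n\<in>UNIV. w a u0 $ n * partial (\<lambda>v. christoffel g n j k v) i u0)
     = partial (\<lambda>v. Gt a j k v) i u0 - (\<Sum>n\<in>UNIV. partial (w a) i u0 $ n * christoffel g n j k u0)"
proof -
  have "partial (\<lambda>v. \<Sum>n\<in>UNIV. w a v $ n * christoffel g n j k v) i u0 = partial (\<lambda>v. Gt a j k v) i u0"
    by (rule partial_local[OF U u0]) (simp add: WGam)
  moreover have "partial (\<lambda>v. \<Sum>n\<in>UNIV. w a v $ n * christoffel g n j k v) i u0
      = (\<Sum>n\<in>UNIV. partial (\<lambda>v. w a v $ n * christoffel g n j k v) i u0)"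
    by (rule partial_sum) (use dwc_diff[OF u0] chris_diff[OF u0] in auto)
  moreover have "partial (\<lambda>v. w a v $ n * christoffel g n j k v) i u0
      = w a u0 $ n * partial (\<lambda>v. christoffel g n j k v) i u0 + partial (w a) i u0 $ n * christoffel g n j k u0" for n
    by (simp add: partial_mult dwc_diff[OF u0] chris_diff[OF u0] partial_comp dw_diff[OF u0])
  ultimately show ?thesis by (simp add: sum.distrib)
qed


lemma dGt:
  "partial (\<lambda>v. Gt a j k v) i u0 = partial (\<lambda>v. partial (w a) j v $ k) i u0
     + (\<Sum>p\<in>UNIV. \<Sum>q\<in>UNIV. Lc D a p q * (w p u0 $ j * partial (w q) i u0 $ k + partial (w p) i u0 $ j * w q u0 $ k))"
proof -
  have dN: "(\<lambda>v. Nf a j k v) differentiable (at u0)"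
    using Ck_diffble'[OF C_Nf] u0 by simp
  have "partial (\<lambda>v. Gt a j k v) i u0 = partial (\<lambda>v. partial (w a) j v $ k) i u0 + partial (\<lambda>v. Nf a j k v) i u0"
    unfolding Gt_def by (rule partial_add[OF ddwc_diff[OF u0] dN])
  moreover have "partial (\<lambda>v. Nf a j k v) i u0 = (\<Sum>p\<in>UNIV. \<Sum>q\<in>UNIV. Lc D a p q * (w p u0 $ j * partial (w q) i u0 $ k + partial (w p) i u0 $ j * w q u0 $ k))"
  proof -
    have "partial (\<lambda>v. Nf a j k v) i u0 = (\<Sum>p\<in>UNIV. partial (\<lambda>v. \<Sum>q\<in>UNIV. Lc D a p q * (w p v $ j * w q v $ k)) i u0)"
      unfolding Nf_def by (rule partial_sum) (use dwc_diff[OF u0] in auto)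
    also have "\<dots> = (\<Sum>p\<in>UNIV. \<Sum>q\<in>UNIV. partial (\<lambda>v. Lc D a p q * (w p v $ j * w q v $ k)) i u0)"
      by (rule sum.cong[OF refl], rule partial_sum) (use dwc_diff[OF u0] in auto)
    also have "\<dots> = (\<Sum>p\<in>UNIV. \<Sum>q\<in>UNIV. Lc D a p q * (w p u0 $ j * partial (w q) i u0 $ k + partial (w p) i u0 $ j * w q u0 $ k))"
      by (simp add: partial_cmult partial_mult dwc_diff[OF u0] partial_comp dw_diff[OF u0])
    finally show ?thesis .
  qed
  ultimately show ?thesis by simp
qed

lemma schw: "partial (\<lambda>v. partial (w a) j v $ k) i u0 = partial (\<lambda>v. partial (w a) i v $ k) j u0"
proof -
  define F where "F = (\<lambda>v. w a v $ k)"
  have C2: "Ck 2 U F" unfolding F_def using Ck_mono[OF Cw] by simp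
  have pF: "partial F l v = partial (w a) l v $ k" if "v \<in> U" for l v
    unfolding F_def by (rule partial_comp[OF dw_diff[OF that]])
  have "partial (\<lambda>v. partial (w a) j v $ k) i u0 = partial (partial F j) i u0"
    by (rule partial_local[OF U u0]) (simp add: pF)
  also have "\<dots> = partial (partial F i) j u0" by (rule schwarz_real[OF U u0 C2])
  also have "\<dots> = partial (\<lambda>v. partial (w a) i v $ k) j u0"
    by (rule partial_local[OF U u0]) (simp add: pF)
  finally show ?thesis .
qed

lemma regroup3:
  fixes G d :: "3 \<Rightarrow> real" and L :: "3 \<Rightarrow> 3 \<Rightarrow> real" and x :: "3 \<Rightarrow> real" and y :: "3 \<Rightarrow> 3 \<Rightarrow> real"
  shows "(\<Sum>m\<in>UNIV. G m * (d m + (\<Sum>p\<in>UNIV. \<Sum>q\<in>UNIV. L p q * (x p * y q m))))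
    = (\<Sum>m\<in>UNIV. G m * d m) + (\<Sum>q\<in>UNIV. (\<Sum>p\<in>UNIV. L p q * x p) * (\<Sum>m\<in>UNIV. y q m * G m))"
  by (simp add: sum_3 algebra_simps)

lemma R3:
  "(\<Sum>m\<in>UNIV. christoffel g m j k u0 * Gt a i m u0)
    = (\<Sum>m\<in>UNIV. christoffel g m j k u0 * partial (w a) i u0 $ m)
      + (\<Sum>q\<in>UNIV. (\<Sum>p\<in>UNIV. Lc D a p q * w p u0 $ i) * Gt q j k u0)"
  unfolding Gt_def[of a i] Nf_def regroup3 WGam[OF u0] ..

lemma frameR:
  "(\<Sum>n\<in>UNIV. w a u0 $ n * riemann g n i j k u0)
     = (\<Sum>x\<in>UNIV. \<Sum>y\<in>UNIV. \<Sum>z\<in>UNIV. Tc (Lc D) a x y z * (w x u0 $ i * w y u0 $ j * w z u0 $ k))"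
proof -
  let ?C = "\<lambda>n j k. christoffel g n j k u0"
  have R1: "(\<Sum>n\<in>UNIV. w a u0 $ n * riemann g n i j k u0)
     = (\<Sum>n\<in>UNIV. w a u0 $ n * partial (\<lambda>v. christoffel g n j k v) i u0)
     - (\<Sum>n\<in>UNIV. w a u0 $ n * partial (\<lambda>v. christoffel g n i k v) j u0)
     + (\<Sum>m\<in>UNIV. ?C m j k * (\<Sum>n\<in>UNIV. w a u0 $ n * ?C n i m))
     - (\<Sum>m\<in>UNIV. ?C m i k * (\<Sum>n\<in>UNIV. w a u0 $ n * ?C n j m))"
    unfolding riemann_def by (simp add: sum_3 algebra_simps)
  also have "\<dots> = (partial (\<lambda>v. Gt a j k v) i u0 - (\<Sum>n\<in>UNIV. partial (w a) i u0 $ n * ?C n j k))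
     - (partial (\<lambda>v. Gt a i k v) j u0 - (\<Sum>n\<in>UNIV. partial (w a) j u0 $ n * ?C n i k))
     + (\<Sum>m\<in>UNIV. ?C m j k * Gt a i m u0)
     - (\<Sum>m\<in>UNIV. ?C m i k * Gt a j m u0)"
    by (simp only: B1 WGam[OF u0])
  also have "\<dots> = partial (\<lambda>v. Gt a j k v) i u0 - partial (\<lambda>v. Gt a i k v) j u0
     + (\<Sum>q\<in>UNIV. (\<Sum>p\<in>UNIV. Lc D a p q * w p u0 $ i) * Gt q j k u0)
     - (\<Sum>q\<in>UNIV. (\<Sum>p\<in>UNIV. Lc D a p q * w p u0 $ j) * Gt q i k u0)"
    unfolding R3 by (simp add: mult.commute)
  also have "\<dots> = (\<Sum>x\<in>UNIV. \<Sum>y\<in>UNIV. \<Sum>z\<in>UNIV. Tc (Lc D) a x y z * (w x u0 $ i * w y u0 $ j * w z u0 $ k))"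
  proof -
    have s: "\<And>p. partial (w p) j u0 $ i = partial (w p) i u0 $ j - (w (p+1) u0 $ i * w (p+2) u0 $ j - w (p+1) u0 $ j * w (p+2) u0 $ i)"
      using struct[OF u0] by (simp add: algebra_simps)
    show ?thesis
      unfolding dGt unfolding Gt_def Nf_def
      by (rule coreB[OF schw[symmetric] s])
  qed
  finally show ?thesis .
qed

end

lemma contract:
  fixes T :: "3 \<Rightarrow> 3 \<Rightarrow> 3 \<Rightarrow> real" and W :: "3 \<Rightarrow> 3 \<Rightarrow> real" and x y z :: "3 \<Rightarrow> real"
  shows "(\<Sum>i\<in>UNIV. \<Sum>j\<in>UNIV. \<Sum>k\<in>UNIV. x i * y j * z k * (\<Sum>p\<in>UNIV. \<Sum>q\<in>UNIV. \<Sum>r\<in>UNIV. T p q r * (W p i * W q j * W r k)))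
       = (\<Sum>p\<in>UNIV. \<Sum>q\<in>UNIV. \<Sum>r\<in>UNIV. T p q r * (\<Sum>i\<in>UNIV. W p i * x i) * (\<Sum>j\<in>UNIV. W q j * y j) * (\<Sum>k\<in>UNIV. W r k * z k))"
  unfolding sum_3 by algebra

lemma pull_b:
  fixes c :: "3 \<Rightarrow> real" and F :: "3 \<Rightarrow> 3 \<Rightarrow> 3 \<Rightarrow> 3 \<Rightarrow> real" and x y z :: "3 \<Rightarrow> real"
  shows "(\<Sum>i\<in>UNIV. \<Sum>j\<in>UNIV. \<Sum>k\<in>UNIV. x i * y j * z k * (\<Sum>b\<in>UNIV. c b * F b i j k))
    = (\<Sum>b\<in>UNIV. c b * (\<Sum>i\<in>UNIV. \<Sum>j\<in>UNIV. \<Sum>k\<in>UNIV. x i * y j * z k * F b i j k))"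
  unfolding sum_3 by algebra

lemma numstep:
  fixes x R D :: "3 \<Rightarrow> real" and W :: "3 \<Rightarrow> 3 \<Rightarrow> real" and c :: real
  shows "(\<Sum>l\<in>UNIV. \<Sum>n\<in>UNIV. c * x l * R n * (\<Sum>b\<in>UNIV. D b * (W b n * W b l)))
     = c * (\<Sum>b\<in>UNIV. D b * (\<Sum>l\<in>UNIV. W b l * x l) * (\<Sum>n\<in>UNIV. W b n * R n))"
  unfolding sum_3 by algebra

lemma gform_step:
  fixes x y D :: "3 \<Rightarrow> real" and W :: "3 \<Rightarrow> 3 \<Rightarrow> real"
  shows "(\<Sum>i\<in>UNIV. \<Sum>j\<in>UNIV. x i * y j * (\<Sum>b\<in>UNIV. D b * (W b i * W b j)))
     = (\<Sum>b\<in>UNIV. D b * (\<Sum>i\<in>UNIV. W b i * x i) * (\<Sum>j\<in>UNIV. W b j * y j))"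
  unfolding sum_3 by algebra

context frame begin

lemma gform_eq:
  "gform g u0 x y = (\<Sum>b\<in>UNIV. D b * (\<Sum>i\<in>UNIV. w b u0 $ i * x $ i) * (\<Sum>j\<in>UNIV. w b u0 $ j * y $ j))"
  unfolding gform_def gdef[OF u0] using gform_step[of "\<lambda>i. x $ i" "\<lambda>j. y $ j" D "\<lambda>b i. w b u0 $ i"]
  by simp

lemma numer_eq:
  "(\<Sum>i\<in>UNIV. \<Sum>j\<in>UNIV. \<Sum>k\<in>UNIV. \<Sum>l\<in>UNIV. \<Sum>n\<in>UNIV.
        x $ i * y $ j * y $ k * x $ l * riemann g n i j k u0 * g u0 $ n $ l)
   = (\<Sum>b\<in>UNIV. D b * (\<Sum>i\<in>UNIV. w b u0 $ i * x $ i) *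
        (\<Sum>p\<in>UNIV. \<Sum>q\<in>UNIV. \<Sum>r\<in>UNIV. Tc (Lc D) b p q r * (\<Sum>i\<in>UNIV. w p u0 $ i * x $ i)
            * (\<Sum>j\<in>UNIV. w q u0 $ j * y $ j) * (\<Sum>k\<in>UNIV. w r u0 $ k * y $ k)))"
proof -
  define sv where "sv b = (\<Sum>i\<in>UNIV. w b u0 $ i * x $ i)" for b
  have "(\<Sum>i\<in>UNIV. \<Sum>j\<in>UNIV. \<Sum>k\<in>UNIV. \<Sum>l\<in>UNIV. \<Sum>n\<in>UNIV.
        x $ i * y $ j * y $ k * x $ l * riemann g n i j k u0 * g u0 $ n $ l)
     = (\<Sum>i\<in>UNIV. \<Sum>j\<in>UNIV. \<Sum>k\<in>UNIV. x $ i * y $ j * y $ k *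
          (\<Sum>b\<in>UNIV. D b * sv b * (\<Sum>n\<in>UNIV. w b u0 $ n * riemann g n i j k u0)))"
  proof (intro sum.cong refl)
    fix i j k
    show "(\<Sum>l\<in>UNIV. \<Sum>n\<in>UNIV. x $ i * y $ j * y $ k * x $ l * riemann g n i j k u0 * g u0 $ n $ l)
      = x $ i * y $ j * y $ k * (\<Sum>b\<in>UNIV. D b * sv b * (\<Sum>n\<in>UNIV. w b u0 $ n * riemann g n i j k u0))"
      unfolding gdef[OF u0] sv_def
      using numstep[of "x $ i * y $ j * y $ k" "\<lambda>l. x $ l" "\<lambda>n. riemann g n i j k u0" D "\<lambda>b i. w b u0 $ i"]
      by (simp add: mult_ac)
  qed
  also have "\<dots> = (\<Sum>i\<in>UNIV. \<Sum>j\<in>UNIV. \<Sum>k\<in>UNIV. x $ i * y $ j * y $ k *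
          (\<Sum>b\<in>UNIV. D b * sv b * (\<Sum>p\<in>UNIV. \<Sum>q\<in>UNIV. \<Sum>r\<in>UNIV. Tc (Lc D) b p q r * (w p u0 $ i * w q u0 $ j * w r u0 $ k))))"
    by (simp only: frameR)
  also have "\<dots> = (\<Sum>b\<in>UNIV. D b * sv b * (\<Sum>i\<in>UNIV. \<Sum>j\<in>UNIV. \<Sum>k\<in>UNIV. x $ i * y $ j * y $ k *
          (\<Sum>p\<in>UNIV. \<Sum>q\<in>UNIV. \<Sum>r\<in>UNIV. Tc (Lc D) b p q r * (w p u0 $ i * w q u0 $ j * w r u0 $ k))))"
    by (rule pull_b)
  also have "\<dots> = (\<Sum>b\<in>UNIV. D b * sv b *
        (\<Sum>p\<in>UNIV. \<Sum>q\<in>UNIV. \<Sum>r\<in>UNIV. Tc (Lc D) b p q r * (\<Sum>i\<in>UNIV. w p u0 $ i * x $ i)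
            * (\<Sum>j\<in>UNIV. w q u0 $ j * y $ j) * (\<Sum>k\<in>UNIV. w r u0 $ k * y $ k)))"
    by (simp only: contract)
  finally show ?thesis by (simp only: sv_def)
qed

lemma sect_eq:
  "sectional_curvature g u0 x y =
   (\<Sum>b\<in>UNIV. D b * (\<Sum>i\<in>UNIV. w b u0 $ i * x $ i) *
        (\<Sum>p\<in>UNIV. \<Sum>q\<in>UNIV. \<Sum>r\<in>UNIV. Tc (Lc D) b p q r * (\<Sum>i\<in>UNIV. w p u0 $ i * x $ i)
            * (\<Sum>j\<in>UNIV. w q u0 $ j * y $ j) * (\<Sum>k\<in>UNIV. w r u0 $ k * y $ k)))
   / (gform g u0 x x * gform g u0 y y - (gform g u0 x y)\<^sup>2)"
  unfolding sectional_curvature_def numer_eq ..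

end

lemma hvd_linear:
  assumes "bounded_linear L" "(f has_vector_derivative f') F"
  shows "((\<lambda>x. L (f x)) has_vector_derivative L f') F"
proof -
  have "((\<lambda>x. L (f x)) has_derivative (\<lambda>h. L (h *\<^sub>R f'))) F"
    using bounded_linear.has_derivative[OF assms(1) assms(2)[unfolded has_vector_derivative_def]] .
  moreover have "(\<lambda>h. L (h *\<^sub>R f')) = (\<lambda>h. h *\<^sub>R L f')"
    using bounded_linear.linear[OF assms(1)] by (auto simp: linear_scale)
  ultimately show ?thesis by (simp add: has_vector_derivative_def)
qed


lemma pp_c:
  fixes p :: "real^3"
  assumes "c > 0" "norm p = 1 / sqrt c"
  shows "p \<bullet> p = 1 / c"
proof -
  have "p \<bullet> p = (norm p)\<^sup>2" by (simp add: power2_norm_eq_inner)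
  also have "\<dots> = 1 / c" using assms by (simp add: power_divide)
  finally show ?thesis .
qed

lemma is_hlift_unique:
  assumes c: "c > 0" and p: "norm p = 1 / sqrt c" and H: "is_hlift c p e X W"
  shows "W = (X, (- (c * (e \<bullet> X))) *\<^sub>R p)"
proof -
  obtain \<gamma> V where g: "\<forall>t. \<gamma> t \<in> sphere2 c \<and> \<gamma> differentiable (at t)" "\<gamma> 0 = p"
      "(\<gamma> has_vector_derivative X) (at 0)" "V 0 = e" "parallel_along \<gamma> V"
      "((\<lambda>t. (\<gamma> t, V t)) has_vector_derivative W) (at 0)"
    using H unfolding is_hlift_def by blast
  define Y where "Y = vector_derivative V (at 0)"
  have Vd: "(V has_vector_derivative Y) (at 0)"
    using g(5) unfolding parallel_along_def Y_def by (simp add: vector_derivative_works[symmetric])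
  have tp: "tproj p Y = 0" using g(5) g(2) unfolding parallel_along_def Y_def by metis
  have orth: "\<And>t. V t \<bullet> \<gamma> t = 0" using g(5) unfolding parallel_along_def by blast
  have "((\<lambda>t. (\<gamma> t, V t)) has_vector_derivative (X, Y)) (at 0)"
    by (rule has_vector_derivative_Pair[OF g(3) Vd])
  then have W: "W = (X, Y)" using g(6) vector_derivative_unique_at by blast
  have d1: "((\<lambda>t. V t \<bullet> \<gamma> t) has_derivative (\<lambda>h. V 0 \<bullet> (h *\<^sub>R X) + (h *\<^sub>R Y) \<bullet> \<gamma> 0)) (at 0)"
    using bounded_bilinear.FDERIV[OF bounded_bilinear_inner Vd[unfolded has_vector_derivative_def]
        g(3)[unfolded has_vector_derivative_def]] .
  have d2: "((\<lambda>t. V t \<bullet> \<gamma> t) has_derivative (\<lambda>h. 0)) (at 0)"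
    using orth by simp
  have "(\<lambda>h. V 0 \<bullet> (h *\<^sub>R X) + (h *\<^sub>R Y) \<bullet> \<gamma> 0) = (\<lambda>h::real. 0)"
    using has_derivative_unique[OF d1 d2] .
  then have "V 0 \<bullet> (1 *\<^sub>R X) + (1 *\<^sub>R Y) \<bullet> \<gamma> 0 = 0" by metis
  then have eY: "e \<bullet> X + Y \<bullet> p = 0" using g(2,4) by simp
  have ppc: "p \<bullet> p = 1 / c" using pp_c[OF c p] .
  have "Y = ((Y \<bullet> p) / (p \<bullet> p)) *\<^sub>R p" using tp unfolding tproj_def by simp
  also have "\<dots> = (- (c * (e \<bullet> X))) *\<^sub>R p"
  proof -
    have yp: "Y \<bullet> p = - (e \<bullet> X)" using eY by linarith
    have "(Y \<bullet> p) / (p \<bullet> p) = - (c * (e \<bullet> X))" unfolding ppc yp using c by simp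
    then show ?thesis by simp
  qed
  finally show ?thesis using W by simp
qed

lemma is_hlift_exists:
  assumes c: "c > 0" and p: "norm p = 1 / sqrt c" and ep: "e \<bullet> p = 0" and Xp: "X \<bullet> p = 0"
  shows "is_hlift c p e X (X, (- (c * (e \<bullet> X))) *\<^sub>R p)"
proof (cases "X = 0")
  case True
  have "parallel_along (\<lambda>t. p) (\<lambda>t. e)"
    unfolding parallel_along_def tproj_def using ep
    by (auto simp: vector_derivative_const_at)
  moreover have "((\<lambda>t. (p, e)) has_vector_derivative (X, (- (c * (e \<bullet> X))) *\<^sub>R p)) (at 0)"
    using True by (simp add: zero_prod_def[symmetric])
  ultimately show ?thesis
    unfolding is_hlift_def sphere2_def using p True
    by (intro exI[of _ "\<lambda>t. p"] exI[of _ "\<lambda>t. e"]) auto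
next
  case False
  define n where "n = norm X"
  define k where "k = sqrt c * n"
  define E where "E = e \<bullet> X"
  define \<alpha> where "\<alpha> = E / n\<^sup>2"
  define \<beta> where "\<beta> = E * c / k"
  have n: "n > 0" using False by (simp add: n_def)
  have k: "k > 0" using n c by (simp add: k_def)
  have kk: "k * k = c * (n * n)" using c by (simp add: k_def)
  have XX: "X \<bullet> X = n * n" by (simp add: n_def dot_square_norm power2_eq_square)
  have ppc: "p \<bullet> p = 1 / c" using pp_c[OF c p] .
  have pX: "p \<bullet> X = 0" using Xp by (simp add: inner_commute)
  define \<gamma> where "\<gamma> t = cos (k*t) *\<^sub>R p + (sin (k*t) / k) *\<^sub>R X" for t
  define \<gamma>' where "\<gamma>' t = (- (k * sin (k*t))) *\<^sub>R p + cos (k*t) *\<^sub>R X" for t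
  define V where "V t = e + (\<alpha> * (cos (k*t) - 1)) *\<^sub>R X - (\<beta> * sin (k*t)) *\<^sub>R p" for t
  define V' where "V' t = (- (\<alpha> * k * sin (k*t))) *\<^sub>R X - (\<beta> * k * cos (k*t)) *\<^sub>R p" for t
  have dg: "(\<gamma> has_vector_derivative \<gamma>' t) (at t)" for t
    unfolding \<gamma>_def \<gamma>'_def using k by (auto intro!: derivative_eq_intros simp: field_simps)
  have dV: "(V has_vector_derivative V' t) (at t)" for t
    unfolding V_def V'_def using k by (auto intro!: derivative_eq_intros simp: field_simps)
  have ak: "\<alpha> * k = \<beta>"
    unfolding \<alpha>_def \<beta>_def using kk n k by (simp add: field_simps power2_eq_square)
  have bk: "\<beta> * k = c * E" unfolding \<beta>_def using k by simp
  have V'g: "V' t = (- (c * E)) *\<^sub>R \<gamma> t" for t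
  proof -
    have "V' t = (- (\<beta> * sin (k*t))) *\<^sub>R X - (\<beta> * k * cos (k*t)) *\<^sub>R p"
      unfolding V'_def using ak by (simp add: mult.assoc[symmetric])
    also have "\<dots> = (- (c * E)) *\<^sub>R \<gamma> t"
      unfolding \<gamma>_def using bk k by (simp add: algebra_simps scaleR_add_right divide_inverse) (simp add: field_simps)
    finally show ?thesis .
  qed
  have gg: "\<gamma> t \<bullet> \<gamma> t = 1 / c" for t
  proof -
    have "\<gamma> t \<bullet> \<gamma> t = (cos (k*t))\<^sup>2 * (p \<bullet> p) + (sin (k*t) / k)\<^sup>2 * (X \<bullet> X)"
      unfolding \<gamma>_def by (simp add: inner_add_left inner_add_right pX Xp power2_eq_square algebra_simps)
    also have "\<dots> = 1 / c"
    proof -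
      have h1: "(sin (k*t) / k)\<^sup>2 * (X \<bullet> X) = (sin (k*t))\<^sup>2 / c"
        unfolding XX using kk k n c by (simp add: power_divide field_simps power2_eq_square)
      have h2: "(cos (k*t))\<^sup>2 + (sin (k*t))\<^sup>2 = 1" by simp
      have "(cos (k*t))\<^sup>2 * (1 / c) + (sin (k*t))\<^sup>2 / c = ((cos (k*t))\<^sup>2 + (sin (k*t))\<^sup>2) / c"
        by (simp only: add_divide_distrib times_divide_eq_right mult_1_right)
      also have "\<dots> = 1 / c" by (simp only: h2)
      finally show ?thesis unfolding ppc h1 .
    qed
    finally show ?thesis .
  qed
  have gn: "norm (\<gamma> t) = 1 / sqrt c" for t
  proof -
    have "(norm (\<gamma> t))\<^sup>2 = 1 / c" using gg[of t] by (simp add: power2_norm_eq_inner)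
    then have "sqrt (1 / c) = norm (\<gamma> t)" by (intro real_sqrt_unique) simp_all
    then have "norm (\<gamma> t) = sqrt (1 / c)" by simp
    then show ?thesis by (simp add: real_sqrt_divide)
  qed
  have Vg: "V t \<bullet> \<gamma> t = 0" for t
  proof -
    have "V t \<bullet> \<gamma> t = (sin (k*t) / k) * E + \<alpha> * (cos (k*t) - 1) * (sin (k*t) / k) * (X \<bullet> X)
        - \<beta> * sin (k*t) * cos (k*t) * (p \<bullet> p)"
      unfolding V_def \<gamma>_def E_def
      by (simp add: inner_add_left inner_add_right inner_diff_left pX Xp ep inner_commute algebra_simps)
    also have "\<dots> = 0"
      unfolding \<alpha>_def \<beta>_def using XX ppc n k c by (simp add: field_simps power2_eq_square)
    finally show ?thesis .
  qed
  have par: "parallel_along \<gamma> V"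
    unfolding parallel_along_def
  proof (intro allI conjI)
    fix t
    show "V differentiable (at t)" using dV by (rule differentiableI_vector)
    show "V t \<bullet> \<gamma> t = 0" by (rule Vg)
    have "vector_derivative V (at t) = V' t" using dV by (rule vector_derivative_at)
    then show "tproj (\<gamma> t) (vector_derivative V (at t)) = 0"
      unfolding tproj_def V'g using gg[of t] c by simp
  qed
  have "((\<lambda>t. (\<gamma> t, V t)) has_vector_derivative (\<gamma>' 0, V' 0)) (at 0)"
    by (rule has_vector_derivative_Pair[OF dg dV])
  moreover have "(\<gamma>' 0, V' 0) = (X, (- (c * (e \<bullet> X))) *\<^sub>R p)"
    using V'g[of 0] by (simp add: \<gamma>'_def \<gamma>_def E_def)
  moreover have "\<gamma> 0 = p" "V 0 = e" by (simp_all add: \<gamma>_def V_def)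
  moreover have "(\<gamma> has_vector_derivative X) (at 0)" using dg[of 0] by (simp add: \<gamma>'_def)
  moreover have "\<forall>t. \<gamma> t \<in> sphere2 c \<and> \<gamma> differentiable (at t)"
    using gn dg by (auto simp: sphere2_def intro: differentiableI_vector)
  ultimately show ?thesis unfolding is_hlift_def using par
    by (intro exI[of _ \<gamma>] exI[of _ V]) simp
qed

lemma hlift_eq:
  assumes c: "c > 0" and p: "norm p = 1 / sqrt c" and ep: "e \<bullet> p = 0" and Xp: "X \<bullet> p = 0"
  shows "hlift c p e X = (X, (- (c * (e \<bullet> X))) *\<^sub>R p)"
  unfolding hlift_def
  using is_hlift_exists[OF assms] is_hlift_unique[OF c p] by (rule the_equality)

lemma vlift_eq: "vlift p e Y = (0, Y)"
proof -
  have "((\<lambda>t. (p, e + t *\<^sub>R Y)) has_vector_derivative (0, Y)) (at 0)"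
    by (auto intro!: derivative_eq_intros)
  then show ?thesis unfolding vlift_def by (rule vector_derivative_at)
qed

lemma lift_coords_eq:
  assumes c: "c > 0" and p: "norm p = 1 / sqrt c" and ep: "e \<bullet> p = 0"
    and t1: "fst \<xi> \<bullet> p = 0" and t2: "snd \<xi> \<bullet> p + e \<bullet> fst \<xi> = 0"
  shows "lift_coords c p e \<xi> = (fst \<xi>, snd \<xi> + (c * (e \<bullet> fst \<xi>)) *\<^sub>R p)"
proof -
  have ppc: "p \<bullet> p = 1 / c" using pp_c[OF c p] .
  let ?P = "\<lambda>(X, Y). X \<bullet> p = 0 \<and> Y \<bullet> p = 0 \<and> \<xi> = hlift c p e X + vlift p e Y"
  have ex: "?P (fst \<xi>, snd \<xi> + (c * (e \<bullet> fst \<xi>)) *\<^sub>R p)"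
  proof -
    have "(snd \<xi> + (c * (e \<bullet> fst \<xi>)) *\<^sub>R p) \<bullet> p = 0"
      using t2 c by (simp add: inner_add_left ppc)
    moreover have "\<xi> = hlift c p e (fst \<xi>) + vlift p e (snd \<xi> + (c * (e \<bullet> fst \<xi>)) *\<^sub>R p)"
      by (simp add: hlift_eq[OF c p ep t1] vlift_eq prod_eq_iff)
    ultimately show ?thesis using t1 by simp
  qed
  have un: "z = (fst \<xi>, snd \<xi> + (c * (e \<bullet> fst \<xi>)) *\<^sub>R p)" if "?P z" for z
  proof -
    obtain X Y where z: "z = (X, Y)" by (cases z)
    have X: "X \<bullet> p = 0" and Y: "Y \<bullet> p = 0" and xi: "\<xi> = hlift c p e X + vlift p e Y"
      using that z by auto
    have "\<xi> = (X, (- (c * (e \<bullet> X))) *\<^sub>R p + Y)"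
      using xi by (simp add: hlift_eq[OF c p ep X] vlift_eq)
    then show ?thesis using z by (auto simp: algebra_simps)
  qed
  show ?thesis unfolding lift_coords_def
    by (rule the_equality) (use ex un in auto)
qed

lemma hCG_eq:
  assumes c: "c > 0" and p: "norm p = 1 / sqrt c" and ep: "e \<bullet> p = 0"
    and t1: "fst \<xi> \<bullet> p = 0" and t2: "snd \<xi> \<bullet> p + e \<bullet> fst \<xi> = 0"
    and s1: "fst \<eta> \<bullet> p = 0" and s2: "snd \<eta> \<bullet> p + e \<bullet> fst \<eta> = 0"
  shows "hCG c m r (p, e) \<xi> \<eta> =
     (let \<omega> = 1 / (1 + (norm e)\<^sup>2); Y = snd \<xi> + (c * (e \<bullet> fst \<xi>)) *\<^sub>R p; Y' = snd \<eta> + (c * (e \<bullet> fst \<eta>)) *\<^sub>R p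
      in fst \<xi> \<bullet> fst \<eta> + \<omega> powr m * (Y \<bullet> Y' + r * (Y \<bullet> e) * (Y' \<bullet> e)))"
  unfolding hCG_def using lift_coords_eq[OF c p ep t1 t2] lift_coords_eq[OF c p ep s1 s2]
  by (simp add: Let_def)

lemma bb_cross: "bounded_bilinear cross3"
  using bilinear_conv_bounded_bilinear bilinear_cross by blast

lemma Ck_cross:
  "open U \<Longrightarrow> Ck k U F \<Longrightarrow> Ck k U G \<Longrightarrow> Ck k U (\<lambda>v. cross3 (F v) (G v))"
  using Ck_bilinear[OF bb_cross] by blast

lemma schwarz_vec:
  fixes F :: "real^3 \<Rightarrow> real^3"
  assumes U: "open U" and u: "u \<in> U" and C: "Ck 2 U F"
  shows "partial (partial F i) j u = partial (partial F j) i u"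
proof -
  have dF: "F differentiable (at v)" if "v \<in> U" for v using C that by (simp add: numeral_2_eq_2)
  have dFi: "partial F l differentiable (at v)" if "v \<in> U" for v l using C that by (simp add: numeral_2_eq_2)
  have comp: "partial (partial F i) j u $ n = partial (partial (\<lambda>v. F v $ n) i) j u" for i j n
  proof -
    have "partial (partial F i) j u $ n = partial (\<lambda>v. partial F i v $ n) j u"
      by (rule partial_comp[OF dFi[OF u], symmetric])
    also have "\<dots> = partial (partial (\<lambda>v. F v $ n) i) j u"
      by (rule partial_local[OF U u]) (simp add: partial_comp[OF dF])
    finally show ?thesis .
  qed
  have Cn: "Ck 2 U (\<lambda>v. F v $ n)" for n using Ck_comp[OF U C] .
  show ?thesis
    unfolding vec_eq_iff comp using schwarz_real[OF U u Cn] by simp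
qed

lemma frame_expansion:
  fixes E :: "3 \<Rightarrow> real^3"
  assumes on: "\<And>a b. E a \<bullet> E b = (if a = b then 1 else 0)"
  shows "x \<bullet> y = (\<Sum>c\<in>UNIV. (x \<bullet> E c) * (y \<bullet> E c))"
proof -
  define M :: "real^3^3" where "M = (\<chi> a i. E a $ i)"
  have "M ** transpose M = mat 1"
    using on by (simp add: M_def matrix_matrix_mult_def transpose_def mat_def vec_eq_iff inner_vec_def)
  then have MM: "transpose M ** M = mat 1" using matrix_left_right_inverse by blast
  have "(\<Sum>c\<in>UNIV. (x \<bullet> E c) * (y \<bullet> E c)) = (\<Sum>i\<in>UNIV. \<Sum>j\<in>UNIV. x $ i * y $ j * (transpose M ** M) $ i $ j)"
    unfolding M_def inner_vec_def matrix_matrix_mult_def transpose_def sum_3 by simp algebra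
  also have "\<dots> = x \<bullet> y" unfolding MM by (simp add: mat_def inner_vec_def if_distrib sum.delta cong: if_cong)
  finally show ?thesis by simp
qed

lemma partial_const_on:
  fixes F :: "real^3 \<Rightarrow> 'b::real_normed_vector"
  assumes "open U" "v \<in> U" "\<And>v. v \<in> U \<Longrightarrow> F v = k"
  shows "partial F i v = 0"
proof -
  have "partial F i v = partial (\<lambda>v. k) i v" by (rule partial_local[OF assms(1,2)]) (simp add: assms(3))
  then show ?thesis by (simp add: partial_const)
qed

lemma Ck_vec:
  fixes f :: "'n::finite \<Rightarrow> real^3 \<Rightarrow> real"
  assumes U: "open U" and C: "\<And>i. Ck k U (f i)"
  shows "Ck k U (\<lambda>v. \<chi> i. f i v)"
proof -
  have eq: "(\<lambda>v. \<chi> i. f i v) = (\<lambda>v. \<Sum>i\<in>UNIV. f i v *\<^sub>R axis i (1::real))"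
  proof (rule ext)
    fix v
    show "(\<chi> i. f i v) = (\<Sum>i\<in>UNIV. f i v *\<^sub>R axis i (1::real))"
      using basis_expansion[of "\<chi> i. f i v"] by (simp add: scalar_mult_eq_scaleR)
  qed
  have "Ck k U (\<lambda>v. \<Sum>i\<in>UNIV. f i v *\<^sub>R axis i (1::real))"
    by (intro Ck_sum[OF U] Ck_scaleR[OF U] Ck_const C) auto
  then show ?thesis unfolding eq .
qed

locale chart =
  fixes c :: real and \<phi> :: "real^3 \<Rightarrow> (real^3) \<times> (real^3)" and U :: "(real^3) set"
  assumes c: "c > 0" and U: "open U" and sm: "smooth_on3 U \<phi>" and img: "\<phi> ` U \<subseteq> T1S2 c"
begin

definition "P v = fst (\<phi> v)"
definition "V v = snd (\<phi> v)"
definition Ef :: "3 \<Rightarrow> real^3 \<Rightarrow> real^3" where "Ef a v = (if a = 1 then sqrt c *\<^sub>R P v else if a = 2 then V v else sqrt c *\<^sub>R cross3 (P v) (V v))"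
definition Om :: "3 \<Rightarrow> 3 \<Rightarrow> 3 \<Rightarrow> real^3 \<Rightarrow> real" where "Om a b i v = Ef a v \<bullet> partial (Ef b) i v"

lemma Cphi: "Ck k U \<phi>" using sm unfolding smooth_on3_def by blast
lemma CP: "Ck k U P" unfolding P_def using Ck_linear[OF bounded_linear_fst U Cphi] .
lemma CV: "Ck k U V" unfolding V_def using Ck_linear[OF bounded_linear_snd U Cphi] .

lemma CE: "Ck k U (Ef a)"
proof -
  have "Ck k U (\<lambda>v. sqrt c *\<^sub>R P v)" using Ck_scaleR[OF U Ck_const CP] .
  moreover have "Ck k U (\<lambda>v. sqrt c *\<^sub>R cross3 (P v) (V v))" using Ck_scaleR[OF U Ck_const Ck_cross[OF U CP CV]] .
  ultimately show ?thesis unfolding Ef_def using CV[of k]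
    by (cases "a = 1"; cases "a = 2"; simp)
qed

lemma on_U:
  assumes "v \<in> U"
  shows "norm (P v) = 1 / sqrt c" "V v \<bullet> P v = 0" "norm (V v) = 1"
  using img assms unfolding T1S2_def TS2_def sphere2_def P_def V_def
  by (auto simp: case_prod_beta split: prod.splits)

lemma PP: "v \<in> U \<Longrightarrow> P v \<bullet> P v = 1 / c"
  using pp_c[OF c on_U(1)] .

lemma VV: "v \<in> U \<Longrightarrow> V v \<bullet> V v = 1"
  using on_U(3) by (simp add: dot_square_norm)

lemma Ef_on:
  assumes v: "v \<in> U"
  shows "Ef a v \<bullet> Ef b v = (if a = b then 1 else 0)"
proof -
  have PV: "P v \<bullet> V v = 0" using on_U(2)[OF v] by (simp add: inner_commute)
  have cr: "cross3 (P v) (V v) \<bullet> cross3 (P v) (V v) = 1 / c"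
  proof -
    have "(norm (cross3 (P v) (V v)))\<^sup>2 + (P v \<bullet> V v)\<^sup>2 = (norm (P v) * norm (V v))\<^sup>2"
      by (rule norm_cross_dot)
    then have "(norm (cross3 (P v) (V v)))\<^sup>2 = 1 / c" using on_U[OF v] PV c
      by (simp add: power_divide)
    then show ?thesis by (simp add: dot_square_norm)
  qed
  have d1: "P v \<bullet> cross3 (P v) (V v) = 0" "V v \<bullet> cross3 (P v) (V v) = 0"
    "cross3 (P v) (V v) \<bullet> P v = 0" "cross3 (P v) (V v) \<bullet> V v = 0"
    using dot_cross_self by (auto simp: inner_commute)
  show ?thesis
    using exhaust_3[of a] exhaust_3[of b] c PP[OF v] VV[OF v] PV on_U(2)[OF v] cr d1
    by (auto simp: Ef_def)
qed


lemma E_diff: "v \<in> U \<Longrightarrow> Ef a differentiable (at v)"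
  using Ck_diffble'[OF CE[of 1]] by simp

lemma dE_diff: "v \<in> U \<Longrightarrow> partial (Ef a) i differentiable (at v)"
  using CE[of 2 a] by (simp add: numeral_2_eq_2)

lemma Om_anti:
  assumes v: "v \<in> U"
  shows "Om b a i v = - Om a b i v"
proof -
  have "partial (\<lambda>v. Ef a v \<bullet> Ef b v) i v = 0"
    by (rule partial_const_on[OF U v]) (rule Ef_on)
  moreover have "partial (\<lambda>v. Ef a v \<bullet> Ef b v) i v = Ef a v \<bullet> partial (Ef b) i v + partial (Ef a) i v \<bullet> Ef b v"
    using partial_bilinear[OF bounded_bilinear_inner E_diff[OF v] E_diff[OF v]] .
  ultimately show ?thesis unfolding Om_def by (simp add: inner_commute add_eq_0_iff)
qed

lemma Om_diag: "v \<in> U \<Longrightarrow> Om a a i v = 0"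
  using Om_anti[of v a a] by simp

lemma dE_dot:
  assumes v: "v \<in> U"
  shows "partial (Ef a) i v \<bullet> partial (Ef b) j v = (\<Sum>c\<in>UNIV. Om c a i v * Om c b j v)"
proof -
  have "partial (Ef a) i v \<bullet> partial (Ef b) j v
     = (\<Sum>c\<in>UNIV. (partial (Ef a) i v \<bullet> Ef c v) * (partial (Ef b) j v \<bullet> Ef c v))"
    by (rule frame_expansion) (rule Ef_on[OF v])
  then show ?thesis unfolding Om_def by (simp add: inner_commute)
qed

lemma dOm:
  assumes v: "v \<in> U"
  shows "partial (\<lambda>v. Om x y j v) i v = Ef x v \<bullet> partial (partial (Ef y) j) i v + partial (Ef x) i v \<bullet> partial (Ef y) j v"
  unfolding Om_def using partial_bilinear[OF bounded_bilinear_inner E_diff[OF v] dE_diff[OF v]] .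

lemma dOm_skew:
  assumes v: "v \<in> U"
  shows "partial (\<lambda>v. Om x y j v) i v - partial (\<lambda>v. Om x y i v) j v
     = (\<Sum>c\<in>UNIV. Om c x i v * Om c y j v) - (\<Sum>c\<in>UNIV. Om c x j v * Om c y i v)"
proof -
  have "partial (partial (Ef y) j) i v = partial (partial (Ef y) i) j v"
    using schwarz_vec[OF U v Ck_mono[OF CE[of 2 y]]] by simp
  then show ?thesis unfolding dOm[OF v] dE_dot[OF v] by simp
qed

definition wv :: "3 \<Rightarrow> real^3 \<Rightarrow> real^3" where
  "wv a v = (\<chi> i. if a = 1 then Om 3 2 i v else if a = 2 then Om 3 1 i v else Om 2 1 i v)"

lemma Om_vals:
  assumes v: "v \<in> U"
  shows "Om 3 2 i v = wv 1 v $ i" "Om 3 1 i v = wv 2 v $ i" "Om 2 1 i v = wv 3 v $ i"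
    "Om 2 3 i v = - wv 1 v $ i" "Om 1 3 i v = - wv 2 v $ i" "Om 1 2 i v = - wv 3 v $ i"
    "Om 1 1 i v = 0" "Om 2 2 i v = 0" "Om 3 3 i v = 0"
  using Om_anti[OF v, of 2 3 i] Om_anti[OF v, of 1 3 i] Om_anti[OF v, of 1 2 i]
    Om_diag[OF v, of 1 i] Om_diag[OF v, of 2 i] Om_diag[OF v, of 3 i] by (simp_all add: wv_def)

lemma Cwv: "Ck k U (wv a)"
proof -
  have CO: "Ck k U (\<lambda>v. Om x y i v)" for x y i
  proof -
    have "Ck (Suc k) U (Ef y)" using CE .
    then have "Ck k U (partial (Ef y) i)" by simp
    then show ?thesis unfolding Om_def using Ck_inner[OF U CE] by blast
  qed
  have "Ck k U (\<lambda>v. \<chi> i. if a = 1 then Om 3 2 i v else if a = 2 then Om 3 1 i v else Om 2 1 i v)"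
    by (rule Ck_vec[OF U]) (use CO in \<open>cases "a = 1"; cases "a = 2"; simp\<close>)
  then show ?thesis unfolding wv_def[abs_def] .
qed

lemma wv_diff: "v \<in> U \<Longrightarrow> wv a differentiable (at v)"
  using Ck_diffble'[OF Cwv[of 1]] by simp

lemma wv_comp: "wv 1 v $ j = Om 3 2 j v" "wv 2 v $ j = Om 3 1 j v" "wv 3 v $ j = Om 2 1 j v"
  by (simp_all add: wv_def)

lemma wv_struct:
  assumes v: "v \<in> U"
  shows "partial (wv a) i v $ j - partial (wv a) j v $ i
     = wv (a+1) v $ i * wv (a+2) v $ j - wv (a+1) v $ j * wv (a+2) v $ i"
proof -
  have pc: "partial (wv a) l v $ n = partial (\<lambda>v. wv a v $ n) l v" for l n
    by (rule partial_comp[OF wv_diff[OF v], symmetric])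
  consider "a = 1" | "a = 2" | "a = 3" using exhaust_3 by blast
  then show ?thesis
  proof cases
    case 1
    show ?thesis unfolding pc unfolding 1 wv_comp unfolding dOm_skew[OF v]
      by (simp add: sum_3 Om_vals[OF v] num3_simps)
  next
    case 2
    show ?thesis unfolding pc unfolding 2 wv_comp unfolding dOm_skew[OF v]
      by (simp add: sum_3 Om_vals[OF v] num3_simps algebra_simps)
  next
    case 3
    show ?thesis unfolding pc unfolding 3 wv_comp unfolding dOm_skew[OF v]
      by (simp add: sum_3 Om_vals[OF v] num3_simps algebra_simps)
  qed
qed


lemma phi_diff: "v \<in> U \<Longrightarrow> \<phi> differentiable (at v)"
  using Ck_diffble'[OF Cphi[of 1]] by simp
lemma P_diff: "v \<in> U \<Longrightarrow> P differentiable (at v)"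
  using Ck_diffble'[OF CP[of 1]] by simp
lemma V_diff: "v \<in> U \<Longrightarrow> V differentiable (at v)"
  using Ck_diffble'[OF CV[of 1]] by simp

lemma partial_phi:
  assumes v: "v \<in> U"
  shows "partial \<phi> i v = (partial P i v, partial V i v)"
proof -
  have "partial P i v = fst (partial \<phi> i v)"
    unfolding P_def by (rule partial_linear[OF bounded_linear_fst phi_diff[OF v]])
  moreover have "partial V i v = snd (partial \<phi> i v)"
    unfolding V_def by (rule partial_linear[OF bounded_linear_snd phi_diff[OF v]])
  ultimately show ?thesis by simp
qed

lemma phi_PV: "\<phi> v = (P v, V v)" by (simp add: P_def V_def)

lemma tang1:
  assumes v: "v \<in> U"
  shows "partial P i v \<bullet> P v = 0"
proof -
  have "partial (\<lambda>v. P v \<bullet> P v) i v = 0" by (rule partial_const_on[OF U v]) (rule PP)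
  moreover have "partial (\<lambda>v. P v \<bullet> P v) i v = P v \<bullet> partial P i v + partial P i v \<bullet> P v"
    using partial_bilinear[OF bounded_bilinear_inner P_diff[OF v] P_diff[OF v]] .
  ultimately show ?thesis by (simp add: inner_commute)
qed

lemma tang2:
  assumes v: "v \<in> U"
  shows "partial V i v \<bullet> P v + V v \<bullet> partial P i v = 0"
proof -
  have "partial (\<lambda>v. V v \<bullet> P v) i v = 0" by (rule partial_const_on[OF U v]) (rule on_U(2))
  moreover have "partial (\<lambda>v. V v \<bullet> P v) i v = V v \<bullet> partial P i v + partial V i v \<bullet> P v"
    using partial_bilinear[OF bounded_bilinear_inner V_diff[OF v] P_diff[OF v]] .
  ultimately show ?thesis by simp
qed

lemma tang3:
  assumes v: "v \<in> U"
  shows "V v \<bullet> partial V i v = 0"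
proof -
  have "partial (\<lambda>v. V v \<bullet> V v) i v = 0" by (rule partial_const_on[OF U v]) (rule VV)
  moreover have "partial (\<lambda>v. V v \<bullet> V v) i v = V v \<bullet> partial V i v + partial V i v \<bullet> V v"
    using partial_bilinear[OF bounded_bilinear_inner V_diff[OF v] V_diff[OF v]] .
  ultimately show ?thesis by (simp add: inner_commute)
qed

lemma Ef1: "Ef 1 = (\<lambda>v. sqrt c *\<^sub>R P v)" by (rule ext) (simp add: Ef_def)
lemma Ef2: "Ef 2 = V" by (rule ext) (simp add: Ef_def)
lemma Ef3: "Ef 3 v = sqrt c *\<^sub>R cross3 (P v) (V v)" by (simp add: Ef_def)

lemma dE1:
  assumes v: "v \<in> U"
  shows "partial (Ef 1) i v = sqrt c *\<^sub>R partial P i v"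
  unfolding Ef1 by (rule partial_linear[OF bounded_linear_scaleR_right P_diff[OF v]])

lemma dPdP:
  assumes v: "v \<in> U"
  shows "partial P i v \<bullet> partial P j v = (wv 3 v $ i * wv 3 v $ j + wv 2 v $ i * wv 2 v $ j) / c"
proof -
  have "partial (Ef 1) i v \<bullet> partial (Ef 1) j v = wv 3 v $ i * wv 3 v $ j + wv 2 v $ i * wv 2 v $ j"
    unfolding dE_dot[OF v] by (simp add: sum_3 Om_vals[OF v])
  then have "c * (partial P i v \<bullet> partial P j v) = wv 3 v $ i * wv 3 v $ j + wv 2 v $ i * wv 2 v $ j"
    unfolding dE1[OF v] using c by (simp add: mult.assoc[symmetric])
  then show ?thesis using c by (simp add: field_simps)
qed

definition "Yv i v = partial V i v + (c * (V v \<bullet> partial P i v)) *\<^sub>R P v"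

lemma YE:
  assumes v: "v \<in> U"
  shows "Yv i v \<bullet> Ef 1 v = 0" "Yv i v \<bullet> Ef 2 v = 0" "Yv i v \<bullet> Ef 3 v = wv 1 v $ i"
proof -
  have PV: "P v \<bullet> V v = 0" using on_U(2)[OF v] by (simp add: inner_commute)
  have t2: "partial V i v \<bullet> P v = - (V v \<bullet> partial P i v)" using tang2[OF v, of i] by linarith
  show "Yv i v \<bullet> Ef 1 v = 0"
    unfolding Yv_def Ef1 using PP[OF v] c t2 by (simp add: inner_add_left field_simps)
  show "Yv i v \<bullet> Ef 2 v = 0"
    unfolding Yv_def Ef2 using tang3[OF v] PV on_U(2)[OF v] by (simp add: inner_add_left inner_add_right inner_commute)
  have "partial V i v \<bullet> Ef 3 v = wv 1 v $ i"
    using Om_vals(1)[OF v, of i] unfolding Om_def Ef2 by (simp add: inner_commute)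
  moreover have "P v \<bullet> Ef 3 v = 0" unfolding Ef3 using dot_cross_self by simp
  ultimately show "Yv i v \<bullet> Ef 3 v = wv 1 v $ i"
    unfolding Yv_def by (simp add: inner_add_left)
qed

lemma YY:
  assumes v: "v \<in> U"
  shows "Yv i v \<bullet> Yv j v = wv 1 v $ i * wv 1 v $ j"
proof -
  have "Yv i v \<bullet> Yv j v = (\<Sum>c\<in>UNIV. (Yv i v \<bullet> Ef c v) * (Yv j v \<bullet> Ef c v))"
    by (rule frame_expansion) (rule Ef_on[OF v])
  then show ?thesis by (simp add: sum_3 YE[OF v])
qed

lemma YV: "v \<in> U \<Longrightarrow> Yv i v \<bullet> V v = 0"
  using YE(2) unfolding Ef2 .

definition Dd :: "real \<Rightarrow> 3 \<Rightarrow> real" where "Dd m a = (if a = 1 then (1/2) powr m else 1 / c)"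

lemma g_eq:
  assumes v: "v \<in> U"
  shows "pullback_metric c m r \<phi> v = (\<chi> i j. \<Sum>a\<in>UNIV. Dd m a * (wv a v $ i * wv a v $ j))"
proof -
  have h: "hCG c m r (\<phi> v) (partial \<phi> i v) (partial \<phi> j v) = (\<Sum>a\<in>UNIV. Dd m a * (wv a v $ i * wv a v $ j))" for i j
  proof -
    have t1: "fst (partial \<phi> l v) \<bullet> P v = 0" for l using tang1[OF v] by (simp add: partial_phi[OF v])
    have t2: "snd (partial \<phi> l v) \<bullet> P v + V v \<bullet> fst (partial \<phi> l v) = 0" for l
      using tang2[OF v] by (simp add: partial_phi[OF v])
    have "hCG c m r (\<phi> v) (partial \<phi> i v) (partial \<phi> j v)
      = partial P i v \<bullet> partial P j v + (1 / (1 + (norm (V v))\<^sup>2)) powr m * (Yv i v \<bullet> Yv j v + r * (Yv i v \<bullet> V v) * (Yv j v \<bullet> V v))"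
      unfolding phi_PV[of v] hCG_eq[OF c on_U(1)[OF v] on_U(2)[OF v] t1 t2 t1 t2]
      by (simp add: Let_def partial_phi[OF v] Yv_def)
    also have "\<dots> = (\<Sum>a\<in>UNIV. Dd m a * (wv a v $ i * wv a v $ j))"
      unfolding dPdP[OF v] YY[OF v] YV[OF v] on_U(3)[OF v]
      by (simp add: sum_3 Dd_def num3_simps add_divide_distrib)
    finally show ?thesis .
  qed
  show ?thesis unfolding pullback_metric_def by (simp add: h)
qed

end

lemma Ck_subset:
  fixes F :: "real^3 \<Rightarrow> 'b::real_normed_vector"
  assumes "U' \<subseteq> U"
  shows "Ck k U F \<Longrightarrow> Ck k U' F"
proof (induction k arbitrary: F)
  case 0 then show ?case using continuous_on_subset assms by auto
next
  case (Suc k)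
  then show ?case using assms by auto
qed

context chart
begin

lemma dmap_fst: "u \<in> U \<Longrightarrow> fst (dmap \<phi> u h) = (\<Sum>i\<in>UNIV. h $ i *\<^sub>R partial P i u)"
  unfolding dmap_def by (simp add: fst_sum partial_phi)

lemma dmap_snd: "u \<in> U \<Longrightarrow> snd (dmap \<phi> u h) = (\<Sum>i\<in>UNIV. h $ i *\<^sub>R partial V i u)"
  unfolding dmap_def by (simp add: snd_sum partial_phi)

lemma S_vals:
  assumes u: "u \<in> U"
  shows "(\<Sum>i\<in>UNIV. wv 1 u $ i * h $ i) = Ef 3 u \<bullet> snd (dmap \<phi> u h)"
    "(\<Sum>i\<in>UNIV. wv 2 u $ i * h $ i) = sqrt c * (Ef 3 u \<bullet> fst (dmap \<phi> u h))"
    "(\<Sum>i\<in>UNIV. wv 3 u $ i * h $ i) = sqrt c * (V u \<bullet> fst (dmap \<phi> u h))"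
proof -
  show "(\<Sum>i\<in>UNIV. wv 1 u $ i * h $ i) = Ef 3 u \<bullet> snd (dmap \<phi> u h)"
    unfolding dmap_snd[OF u] wv_comp Om_def Ef2
    by (simp add: inner_sum_right mult.commute)
  show "(\<Sum>i\<in>UNIV. wv 2 u $ i * h $ i) = sqrt c * (Ef 3 u \<bullet> fst (dmap \<phi> u h))"
    unfolding dmap_fst[OF u] wv_comp Om_def dE1[OF u]
    by (simp add: inner_sum_right sum_distrib_left mult_ac)
  show "(\<Sum>i\<in>UNIV. wv 3 u $ i * h $ i) = sqrt c * (V u \<bullet> fst (dmap \<phi> u h))"
    unfolding dmap_fst[OF u] wv_comp Om_def dE1[OF u] Ef2
    by (simp add: inner_sum_right sum_distrib_left mult_ac)
qed

lemma C_detW: "Ck k U (\<lambda>v. det (\<chi> a i. wv a v $ i))"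
proof -
  have C: "Ck k U (\<lambda>v. wv a v $ i)" for a i using Ck_comp[OF U Cwv] .
  show ?thesis unfolding det_3
    by (simp, intro Ck_add[OF U] Ck_diff[OF U] Ck_mult[OF U] C)
qed

end


lemma calc_generic:
  fixes D s t :: "3 \<Rightarrow> real"
  shows "(\<Sum>b\<in>UNIV. D b * s b * (\<Sum>p\<in>UNIV. \<Sum>q\<in>UNIV. \<Sum>r\<in>UNIV. Tc (Lc D) b p q r * s p * t q * t r))
    = (\<Sum>b\<in>UNIV. D b * s b * (\<Sum>p\<in>UNIV. \<Sum>q\<in>UNIV. \<Sum>r\<in>UNIV. Tc (Lc D) b p q r * s p * t q * t r))" ..

lemma calc_ab:
  fixes D :: "3 \<Rightarrow> real" and c l \<sigma> :: real
  assumes D: "D 1 = l" "D 2 = 1 / c" "D 3 = 1 / c" and c: "c > 0" and l: "l > 0" and s: "\<sigma> * \<sigma> = 1"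
  shows "(\<Sum>b\<in>UNIV. D b * (if b = 3 then sqrt c else 0) * (\<Sum>p\<in>UNIV. \<Sum>q\<in>UNIV. \<Sum>r\<in>UNIV.
           Tc (Lc D) b p q r * (if p = 3 then sqrt c else 0) * (if q = 2 then sqrt c * \<sigma> else 0) * (if r = 2 then sqrt c * \<sigma> else 0)))
     = c * (1 - 3 * l * c / 4)"
proof -
  have sc: "sqrt c * sqrt c = c" using c by simp
  have "(\<Sum>b\<in>UNIV. D b * (if b = 3 then sqrt c else 0) * (\<Sum>p\<in>UNIV. \<Sum>q\<in>UNIV. \<Sum>r\<in>UNIV.
           Tc (Lc D) b p q r * (if p = 3 then sqrt c else 0) * (if q = 2 then sqrt c * \<sigma> else 0) * (if r = 2 then sqrt c * \<sigma> else 0)))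
      = D 3 * sqrt c * (Tc (Lc D) 3 3 2 2 * sqrt c * (sqrt c * \<sigma>) * (sqrt c * \<sigma>))"
    by (simp add: sum_3 num3_simps)
  also have T: "Tc (Lc D) 3 3 2 2 = 1 - 3 * l * c / 4"
    unfolding Tc_def Lc_def using c l by (simp add: sum_3 eps_vals num3_simps D) (simp add: field_simps)
  also have "D 3 * sqrt c * ((1 - 3 * l * c / 4) * sqrt c * (sqrt c * \<sigma>) * (sqrt c * \<sigma>))
     = D 3 * (sqrt c * sqrt c) * (sqrt c * sqrt c) * (\<sigma> * \<sigma>) * (1 - 3 * l * c / 4)"
    by algebra
  also have "\<dots> = c * (1 - 3 * l * c / 4)" unfolding sc s D(3) using c by simp
  finally show ?thesis .
qed


lemma calc_ad:
  fixes D :: "3 \<Rightarrow> real" and c l \<sigma> :: real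
  assumes D: "D 1 = l" "D 2 = 1 / c" "D 3 = 1 / c" and c: "c > 0" and l: "l > 0" and s: "\<sigma> * \<sigma> = 1"
  shows "(\<Sum>b\<in>UNIV. D b * (if b = 3 then sqrt c else 0) * (\<Sum>p\<in>UNIV. \<Sum>q\<in>UNIV. \<Sum>r\<in>UNIV.
           Tc (Lc D) b p q r * (if p = 3 then sqrt c else 0) * (if q = 1 then \<sigma> else 0) * (if r = 1 then \<sigma> else 0)))
     = l * l * c * c / 4"
proof -
  have sc: "sqrt c * sqrt c = c" using c by simp
  have "(\<Sum>b\<in>UNIV. D b * (if b = 3 then sqrt c else 0) * (\<Sum>p\<in>UNIV. \<Sum>q\<in>UNIV. \<Sum>r\<in>UNIV.
           Tc (Lc D) b p q r * (if p = 3 then sqrt c else 0) * (if q = 1 then \<sigma> else 0) * (if r = 1 then \<sigma> else 0)))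
      = D 3 * sqrt c * (Tc (Lc D) 3 3 1 1 * sqrt c * \<sigma> * \<sigma>)"
    by (simp add: sum_3 num3_simps)
  also have T: "Tc (Lc D) 3 3 1 1 = l * l * c * c / 4"
    unfolding Tc_def Lc_def using c l by (simp add: sum_3 eps_vals num3_simps D) (simp add: field_simps)
  also have "D 3 * sqrt c * (l * l * c * c / 4 * sqrt c * \<sigma> * \<sigma>)
     = D 3 * (sqrt c * sqrt c) * (\<sigma> * \<sigma>) * (l * l * c * c / 4)"
    by algebra
  also have "\<dots> = l * l * c * c / 4" unfolding sc s D(3) using c by simp
  finally show ?thesis .
qed

lemma calc_bd:
  fixes D :: "3 \<Rightarrow> real" and c l \<sigma> :: real
  assumes D: "D 1 = l" "D 2 = 1 / c" "D 3 = 1 / c" and c: "c > 0" and l: "l > 0" and s: "\<sigma> * \<sigma> = 1"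
  shows "(\<Sum>b\<in>UNIV. D b * (if b = 2 then sqrt c * \<sigma> else 0) * (\<Sum>p\<in>UNIV. \<Sum>q\<in>UNIV. \<Sum>r\<in>UNIV.
           Tc (Lc D) b p q r * (if p = 2 then sqrt c * \<sigma> else 0) * (if q = 1 then \<sigma> else 0) * (if r = 1 then \<sigma> else 0)))
     = l * l * c * c / 4"
proof -
  have sc: "sqrt c * sqrt c = c" using c by simp
  have "(\<Sum>b\<in>UNIV. D b * (if b = 2 then sqrt c * \<sigma> else 0) * (\<Sum>p\<in>UNIV. \<Sum>q\<in>UNIV. \<Sum>r\<in>UNIV.
           Tc (Lc D) b p q r * (if p = 2 then sqrt c * \<sigma> else 0) * (if q = 1 then \<sigma> else 0) * (if r = 1 then \<sigma> else 0)))
      = D 2 * (sqrt c * \<sigma>) * (Tc (Lc D) 2 2 1 1 * (sqrt c * \<sigma>) * \<sigma> * \<sigma>)"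
    by (simp add: sum_3 num3_simps)
  also have T: "Tc (Lc D) 2 2 1 1 = l * l * c * c / 4"
    unfolding Tc_def Lc_def using c l by (simp add: sum_3 eps_vals num3_simps D) (simp add: field_simps)
  also have "D 2 * (sqrt c * \<sigma>) * (l * l * c * c / 4 * (sqrt c * \<sigma>) * \<sigma> * \<sigma>)
     = D 2 * (sqrt c * sqrt c) * (\<sigma> * \<sigma>) * (\<sigma> * \<sigma>) * (l * l * c * c / 4)"
    by algebra
  also have "\<dots> = l * l * c * c / 4" unfolding sc s D(2) using c by simp
  finally show ?thesis .
qed

theorem proposition3:
  fixes c m r :: real and x e f :: "real^3"
    and \<phi> :: "real^3 \<Rightarrow> (real^3) \<times> (real^3)" and U :: "(real^3) set" and u0 a b d :: "real^3"
  assumes "c > 0" and "r \<ge> 0"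
    and "(x, e) \<in> T1S2 c"
    and "f \<bullet> x = 0" and "norm f = 1" and "e \<bullet> f = 0"
    and "open U" and "u0 \<in> U" and "smooth_on3 U \<phi>" and "\<phi> ` U \<subseteq> T1S2 c"
    and "\<phi> u0 = (x, e)" and "inj (dmap \<phi> u0)"
    and "dmap \<phi> u0 a = hlift c x e e"
    and "dmap \<phi> u0 b = hlift c x e f"
    and "dmap \<phi> u0 d = vlift x e f"
  shows "sectional_curvature (pullback_metric c m r \<phi>) u0 a b = c - 3 * c\<^sup>2 / 2 powr (m + 2)
       \<and> sectional_curvature (pullback_metric c m r \<phi>) u0 a d = c\<^sup>2 / 2 powr (m + 2)
       \<and> sectional_curvature (pullback_metric c m r \<phi>) u0 b d = c\<^sup>2 / 2 powr (m + 2)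
       \<and> (m = log 2 c \<longrightarrow>
            sectional_curvature (pullback_metric c m r \<phi>) u0 a b = c / 4
          \<and> sectional_curvature (pullback_metric c m r \<phi>) u0 a d = c / 4
          \<and> sectional_curvature (pullback_metric c m r \<phi>) u0 b d = c / 4)"
proof -
  have c: "c > 0" and U: "open U" and u0: "u0 \<in> U" using assms by auto
  interpret ch: chart c \<phi> U using assms(1,7,9,10) by unfold_locales
  have Px: "ch.P u0 = x" "ch.V u0 = e" using assms(11) by (simp_all add: ch.P_def ch.V_def)
  have xs: "norm x = 1 / sqrt c" "e \<bullet> x = 0" "norm e = 1" using ch.on_U[OF u0] Px by auto
  have ee: "e \<bullet> e = 1" using xs(3) by (simp add: dot_square_norm)
  have sc: "sqrt c * sqrt c = c" using c by simp
  define E3 where "E3 = ch.Ef 3 u0"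
  have E3def: "E3 = sqrt c *\<^sub>R cross3 x e" unfolding E3_def ch.Ef3 Px ..
  have E3x: "E3 \<bullet> x = 0" "E3 \<bullet> e = 0"
    unfolding E3def using dot_cross_self[of x e] by (simp_all add: inner_commute)
  define \<sigma> where "\<sigma> = E3 \<bullet> f"
  have \<sigma>\<sigma>: "\<sigma> * \<sigma> = 1"
  proof -
    have "f \<bullet> f = (\<Sum>k\<in>UNIV. (f \<bullet> ch.Ef k u0) * (f \<bullet> ch.Ef k u0))"
      by (rule frame_expansion) (rule ch.Ef_on[OF u0])
    moreover have "ch.Ef 1 u0 = sqrt c *\<^sub>R x" "ch.Ef 2 u0 = e" using Px by (simp_all add: ch.Ef_def)
    moreover have "f \<bullet> f = 1" using assms(5) by (simp add: dot_square_norm)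
    ultimately show ?thesis using assms(4,6)
      by (simp add: sum_3 \<sigma>_def E3_def inner_commute)
  qed
  have hA: "dmap \<phi> u0 a = (e, (- c) *\<^sub>R x)"
    using assms(13) hlift_eq[OF c xs(1) xs(2) xs(2)] ee by simp
  have hB: "dmap \<phi> u0 b = (f, 0)"
    using assms(14) hlift_eq[OF c xs(1) xs(2) assms(4)] assms(6) by simp
  have hD: "dmap \<phi> u0 d = (0, f)"
    using assms(15) vlift_eq by simp
  have Sa: "(\<Sum>i\<in>UNIV. ch.wv k u0 $ i * a $ i) = (if k = 3 then sqrt c else 0)" for k
    using exhaust_3[of k] ch.S_vals[OF u0, of a] hA E3x Px ee
    by (auto simp: E3_def)
  have Sb: "(\<Sum>i\<in>UNIV. ch.wv k u0 $ i * b $ i) = (if k = 2 then sqrt c * \<sigma> else 0)" for k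
    using exhaust_3[of k] ch.S_vals[OF u0, of b] hB Px assms(6)
    by (auto simp: E3_def \<sigma>_def)
  have Sd: "(\<Sum>i\<in>UNIV. ch.wv k u0 $ i * d $ i) = (if k = 1 then \<sigma> else 0)" for k
    using exhaust_3[of k] ch.S_vals[OF u0, of d] hD
    by (auto simp: E3_def \<sigma>_def)
  have detW: "det (\<chi> k i. ch.wv k u0 $ i) \<noteq> 0"
  proof -
    define M :: "real^3^3" where "M = (\<chi> i q. if q = 1 then a $ i else if q = 2 then b $ i else d $ i)"
    have WM: "(\<chi> k i. ch.wv k u0 $ i) ** M
       = (\<chi> k q. if q = 1 then (if k = 3 then sqrt c else 0) else if q = 2 then (if k = 2 then sqrt c * \<sigma> else 0)
            else (if k = 1 then \<sigma> else 0))"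
      unfolding M_def matrix_matrix_mult_def
      by (simp add: vec_eq_iff forall_3 Sa Sb Sd num3_simps)
    have "det ((\<chi> k i. ch.wv k u0 $ i) ** M) = - (sqrt c * sqrt c) * (\<sigma> * \<sigma>)"
      unfolding WM det_3 by (simp add: num3_simps algebra_simps)
    also have "\<dots> = - c" using sc \<sigma>\<sigma> by simp
    finally have "det (\<chi> k i. ch.wv k u0 $ i) * det M = - c" by (simp add: det_mul)
    then show ?thesis using c by auto
  qed
  define U' where "U' = U \<inter> (\<lambda>v. det (\<chi> a i. ch.wv a v $ i)) -` (UNIV - {0})"
  have oU': "open U'"
  proof -
    have "continuous_on U (\<lambda>v. det (\<chi> a i. ch.wv a v $ i))" using ch.C_detW[of 0] by simp
    then show ?thesis unfolding U'_def
      by (rule continuous_open_preimage[OF _ U]) (simp add: open_Diff)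
  qed
  have u0U': "u0 \<in> U'" unfolding U'_def using u0 detW by simp
  have sub: "U' \<subseteq> U" unfolding U'_def by blast
  define l where "l = (1/2::real) powr m"
  have l: "l > 0" unfolding l_def by simp
  have D: "ch.Dd m 1 = l" "ch.Dd m 2 = 1 / c" "ch.Dd m 3 = 1 / c"
    by (simp_all add: ch.Dd_def l_def)
  interpret fr: frame U' u0 ch.wv "ch.Dd m" "pullback_metric c m r \<phi>"
  proof
    show "open U'" by (rule oU')
    show "u0 \<in> U'" by (rule u0U')
    show "Ck 3 U' (ch.wv a)" for a by (rule Ck_subset[OF sub ch.Cwv])
    show "ch.Dd m a \<noteq> 0" for a using c by (simp add: ch.Dd_def)
    show "pullback_metric c m r \<phi> v = (\<chi> i j. \<Sum>a\<in>UNIV. ch.Dd m a * (ch.wv a v $ i * ch.wv a v $ j))"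
      if "v \<in> U'" for v using ch.g_eq that sub by blast
    show "partial (ch.wv a) i v $ j - partial (ch.wv a) j v $ i
       = ch.wv (a + 1) v $ i * ch.wv (a + 2) v $ j - ch.wv (a + 1) v $ j * ch.wv (a + 2) v $ i"
      if "v \<in> U'" for v a i j using ch.wv_struct that sub by blast
    show "det (\<chi> a i. ch.wv a v $ i) \<noteq> 0" if "v \<in> U'" for v using that unfolding U'_def by simp
  qed
  let ?g = "pullback_metric c m r \<phi>"
  have gf: "gform ?g u0 a a = 1" "gform ?g u0 b b = 1" "gform ?g u0 d d = l"
     "gform ?g u0 a b = 0" "gform ?g u0 a d = 0" "gform ?g u0 b d = 0"
    unfolding fr.gform_eq Sa Sb Sd using c \<sigma>\<sigma> sc
    by (simp_all add: sum_3 D num3_simps algebra_simps)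
  have Kab: "sectional_curvature ?g u0 a b = c * (1 - 3 * l * c / 4)"
    unfolding fr.sect_eq gf unfolding Sa Sb calc_ab[OF D c l \<sigma>\<sigma>] by simp
  have Kad: "sectional_curvature ?g u0 a d = l * c * c / 4"
    unfolding fr.sect_eq gf unfolding Sa Sd calc_ad[OF D c l \<sigma>\<sigma>] using l by simp
  have Kbd: "sectional_curvature ?g u0 b d = l * c * c / 4"
    unfolding fr.sect_eq gf unfolding Sb Sd calc_bd[OF D c l \<sigma>\<sigma>] using l by simp
  have l_eq: "l = 1 / 2 powr m" unfolding l_def by (simp add: powr_divide)
  have p2: "2 powr (m + 2) = 2 powr m * 4" by (simp add: powr_add)
  have pos: "2 powr m > 0" by simp
  have A1: "c * (1 - 3 * l * c / 4) = c - 3 * c\<^sup>2 / 2 powr (m + 2)"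
    unfolding l_eq p2 using pos by (simp add: field_simps power2_eq_square)
  have A2: "l * c * c / 4 = c\<^sup>2 / 2 powr (m + 2)"
    unfolding l_eq p2 using pos by (simp add: field_simps power2_eq_square)
  have A3: "c - 3 * c\<^sup>2 / 2 powr (m + 2) = c / 4" "c\<^sup>2 / 2 powr (m + 2) = c / 4" if "m = log 2 c"
  proof -
    have "2 powr m = c" using that c by simp
    then show "c - 3 * c\<^sup>2 / 2 powr (m + 2) = c / 4" "c\<^sup>2 / 2 powr (m + 2) = c / 4"
      unfolding p2 using c by (simp_all add: field_simps power2_eq_square)
  qed
  have K1: "sectional_curvature ?g u0 a b = c - 3 * c\<^sup>2 / 2 powr (m + 2)" using Kab A1 by simp
  have K2: "sectional_curvature ?g u0 a d = c\<^sup>2 / 2 powr (m + 2)" using Kad A2 by simp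
  have K3: "sectional_curvature ?g u0 b d = c\<^sup>2 / 2 powr (m + 2)" using Kbd A2 by simp
  show ?thesis
  proof (intro conjI impI)
    show "sectional_curvature ?g u0 a b = c - 3 * c\<^sup>2 / 2 powr (m + 2)" by (rule K1)
    show "sectional_curvature ?g u0 a d = c\<^sup>2 / 2 powr (m + 2)" by (rule K2)
    show "sectional_curvature ?g u0 b d = c\<^sup>2 / 2 powr (m + 2)" by (rule K3)
    assume h: "m = log 2 c"
    show "sectional_curvature ?g u0 a b = c / 4" by (simp only: K1 A3(1)[OF h])
    show "sectional_curvature ?g u0 a d = c / 4" by (simp only: K2 A3(2)[OF h])
    show "sectional_curvature ?g u0 b d = c / 4" by (simp only: K3 A3(2)[OF h])
  qed
qed

end
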